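(* Let $\mathcal{H}$ be a complex Hilbert space, let $T_1,T_2\in\mathcal{B}(\mathcal{H})$ be contractions and let $Q\in\mathcal{B}(\mathcal{H})$ be a unitary such that $T_2T_1=T_1T_2Q$. Then there exist a Hilbert space $\mathcal{K}\supseteq\mathcal{H}$, co-isometries $W_1,W_2\in\mathcal{B}(\mathcal{K})$ and a unitary $\overline{Q}\in\mathcal{B}(\mathcal{K})$, with $\mathcal{H}$ reducing $\overline{Q}$ and $\overline{Q}|_{\mathcal{H}}=Q$, such that (i) $W_2W_1=W_1W_2\overline{Q}$; and (ii) $W_i$ is an extension of $T_i$ for $i=1,2$, so that $T_1^nT_2^m=P_{\mathcal{H}}W_1^nW_2^m|_{\mathcal{H}}$ and $T_2^nT_1^m=P_{\mathcal{H}}W_2^nW_1^m|_{\mathcal{H}}$ for all integers $n,m\geq 0$. In fact, given any $q\in\mathbb{T}$, one can choose $\overline{Q}=Q\oplus qI_{\mathcal{K}\ominus\mathcal{H}}$.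
   Context: $S\in\mathcal{B}(\mathcal{K})$ is an extension of $T\in\mathcal{B}(\mathcal{H})$ ($\mathcal{H}\subseteq\mathcal{K}$) if $Sh=Th$ for all $h\in\mathcal{H}$. A co-isometry is $W$ with $WW^*=I$. $\mathbb{T}$ is the unit circle; $P_{\mathcal{H}}$ the orthogonal projection onto $\mathcal{H}$. *)

theory Defs
  imports "HOL-Analysis.Analysis"
begin

text \<open>A complex Hilbert space is modelled as a real Hilbert space (real inner product,
  complete) together with a complex structure: multiplication by the imaginary unit,
  a real-linear orthogonal map whose square is minus the identity.  The real inner
  product is the real part of the complex inner product.\<close>

class complex_hilbert = real_inner + complete_space +
  fixes iunit :: "'a \<Rightarrow> 'a"
  assumes iunit_add: "iunit (x + y) = iunit x + iunit y"
    and iunit_scaleR: "iunit (scaleR r x) = scaleR r (iunit x)"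
    and iunit_iunit: "iunit (iunit x) = - x"
    and inner_iunit: "inner (iunit x) (iunit y) = inner x y"

definition cscale :: "complex \<Rightarrow> 'a::complex_hilbert \<Rightarrow> 'a" where
  "cscale c x = scaleR (Re c) x + scaleR (Im c) (iunit x)"

text \<open>complex inner product (conjugate-linear in the first, linear in the second argument)\<close>
definition cinner :: "'a::complex_hilbert \<Rightarrow> 'a \<Rightarrow> complex" where
  "cinner x y = Complex (inner x y) (inner (iunit x) y)"

definition bop :: "('a::complex_hilbert \<Rightarrow> 'a) \<Rightarrow> bool" where
  "bop T \<longleftrightarrow> bounded_linear T \<and> (\<forall>x. T (iunit x) = iunit (T x))"

definition is_adj :: "('a::complex_hilbert \<Rightarrow> 'a) \<Rightarrow> ('a \<Rightarrow> 'a) \<Rightarrow> bool" where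
  "is_adj T A \<longleftrightarrow> (\<forall>x y. cinner (T x) y = cinner x (A y))"

definition contraction :: "('a::complex_hilbert \<Rightarrow> 'a) \<Rightarrow> bool" where
  "contraction T \<longleftrightarrow> bop T \<and> (\<forall>x. norm (T x) \<le> norm x)"

definition unitary_op :: "('a::complex_hilbert \<Rightarrow> 'a) \<Rightarrow> bool" where
  "unitary_op U \<longleftrightarrow> bop U \<and> (\<exists>A. bop A \<and> is_adj U A \<and> (\<forall>x. A (U x) = x) \<and> (\<forall>x. U (A x) = x))"

text \<open>H is identified with the first coordinate of l2(N,H) via emb.\<close>

definition l2 :: "(nat \<Rightarrow> 'a::complex_hilbert) set" where
  "l2 = {f. summable (\<lambda>n. (norm (f n))\<^sup>2)}"

definition l2cinner :: "(nat \<Rightarrow> 'a::complex_hilbert) \<Rightarrow> (nat \<Rightarrow> 'a) \<Rightarrow> complex" where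
  "l2cinner f g = (\<Sum>n. cinner (f n) (g n))"

definition l2norm :: "(nat \<Rightarrow> 'a::complex_hilbert) \<Rightarrow> real" where
  "l2norm f = sqrt (\<Sum>n. (norm (f n))\<^sup>2)"

definition l2add :: "(nat \<Rightarrow> 'a::complex_hilbert) \<Rightarrow> (nat \<Rightarrow> 'a) \<Rightarrow> nat \<Rightarrow> 'a" where
  "l2add f g = (\<lambda>n. f n + g n)"

definition l2diff :: "(nat \<Rightarrow> 'a::complex_hilbert) \<Rightarrow> (nat \<Rightarrow> 'a) \<Rightarrow> nat \<Rightarrow> 'a" where
  "l2diff f g = (\<lambda>n. f n - g n)"

definition l2scale :: "complex \<Rightarrow> (nat \<Rightarrow> 'a::complex_hilbert) \<Rightarrow> nat \<Rightarrow> 'a" where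
  "l2scale c f = (\<lambda>n. cscale c (f n))"

definition closed_csubspace :: "(nat \<Rightarrow> 'a::complex_hilbert) set \<Rightarrow> bool" where
  "closed_csubspace K \<longleftrightarrow> K \<subseteq> l2 \<and> (\<lambda>n. 0) \<in> K
     \<and> (\<forall>x\<in>K. \<forall>y\<in>K. l2add x y \<in> K) \<and> (\<forall>c. \<forall>x\<in>K. l2scale c x \<in> K)
     \<and> (\<forall>X L. (\<forall>n. X n \<in> K) \<and> L \<in> l2 \<and> (\<lambda>n. l2norm (l2diff (X n) L)) \<longlonglongrightarrow> 0 \<longrightarrow> L \<in> K)"

definition bop_on :: "(nat \<Rightarrow> 'a::complex_hilbert) set \<Rightarrow> ((nat \<Rightarrow> 'a) \<Rightarrow> (nat \<Rightarrow> 'a)) \<Rightarrow> bool" where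
  "bop_on K W \<longleftrightarrow> (\<forall>x\<in>K. W x \<in> K)
     \<and> (\<forall>x\<in>K. \<forall>y\<in>K. W (l2add x y) = l2add (W x) (W y))
     \<and> (\<forall>c. \<forall>x\<in>K. W (l2scale c x) = l2scale c (W x))
     \<and> (\<exists>C. \<forall>x\<in>K. l2norm (W x) \<le> C * l2norm x)"

definition is_adj_on :: "(nat \<Rightarrow> 'a::complex_hilbert) set \<Rightarrow> ((nat \<Rightarrow> 'a) \<Rightarrow> (nat \<Rightarrow> 'a)) \<Rightarrow> ((nat \<Rightarrow> 'a) \<Rightarrow> (nat \<Rightarrow> 'a)) \<Rightarrow> bool" where
  "is_adj_on K W A \<longleftrightarrow> bop_on K A \<and> (\<forall>x\<in>K. \<forall>y\<in>K. l2cinner (W x) y = l2cinner x (A y))"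

definition coisometry_on :: "(nat \<Rightarrow> 'a::complex_hilbert) set \<Rightarrow> ((nat \<Rightarrow> 'a) \<Rightarrow> (nat \<Rightarrow> 'a)) \<Rightarrow> bool" where
  "coisometry_on K W \<longleftrightarrow> bop_on K W \<and> (\<exists>A. is_adj_on K W A \<and> (\<forall>y\<in>K. W (A y) = y))"

definition unitary_on :: "(nat \<Rightarrow> 'a::complex_hilbert) set \<Rightarrow> ((nat \<Rightarrow> 'a) \<Rightarrow> (nat \<Rightarrow> 'a)) \<Rightarrow> bool" where
  "unitary_on K U \<longleftrightarrow> bop_on K U \<and> (\<exists>A. is_adj_on K U A \<and> (\<forall>y\<in>K. U (A y) = y) \<and> (\<forall>x\<in>K. A (U x) = x))"

definition emb :: "'a::complex_hilbert \<Rightarrow> nat \<Rightarrow> 'a" where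
  "emb h = (\<lambda>n. if n = 0 then h else 0)"

definition PH :: "(nat \<Rightarrow> 'a::complex_hilbert) \<Rightarrow> nat \<Rightarrow> 'a" where
  "PH x = emb (x 0)"

definition orth_in :: "(nat \<Rightarrow> 'a::complex_hilbert) set \<Rightarrow> (nat \<Rightarrow> 'a) set \<Rightarrow> (nat \<Rightarrow> 'a) set" where
  "orth_in K M = {x\<in>K. \<forall>y\<in>M. l2cinner y x = 0}"

definition reduces_on :: "(nat \<Rightarrow> 'a::complex_hilbert) set \<Rightarrow> (nat \<Rightarrow> 'a) set \<Rightarrow> ((nat \<Rightarrow> 'a) \<Rightarrow> (nat \<Rightarrow> 'a)) \<Rightarrow> bool" where
  "reduces_on K M U \<longleftrightarrow> (\<forall>x\<in>M. U x \<in> M) \<and> (\<forall>x\<in>orth_in K M. U x \<in> orth_in K M)"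

end

theory Submission
  imports Defs "HOL-Computational_Algebra.Formal_Power_Series"
begin

context complex_hilbert begin
subclass banach ..
end


lemma iunit_zero[simp]: "iunit (0::'a::complex_hilbert) = 0"
  using iunit_scaleR[of 0 "0::'a"] by simp

lemma iunit_uminus[simp]: "iunit (- x::'a::complex_hilbert) = - iunit x"
  using iunit_scaleR[of "-1" x] by simp

lemma iunit_diff: "iunit (x - y::'a::complex_hilbert) = iunit x - iunit y"
  using iunit_add[of x "-y"] by simp

lemma norm_iunit[simp]: "norm (iunit (x::'a::complex_hilbert)) = norm x"
  by (simp add: norm_eq_sqrt_inner inner_iunit)

lemma linear_iunit: "linear (iunit :: 'a::complex_hilbert \<Rightarrow> 'a)"
  by (rule linearI) (simp_all add: iunit_add iunit_scaleR)

lemma bounded_linear_iunit: "bounded_linear (iunit :: 'a::complex_hilbert \<Rightarrow> 'a)"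
  by (rule bounded_linear_intro[where K=1]) (simp_all add: iunit_add iunit_scaleR)

lemma inner_iunit_left: "inner (iunit x) (y::'a::complex_hilbert) = - inner x (iunit y)"
proof -
  have "inner (iunit x) y = inner (iunit (iunit x)) (iunit y)" by (simp add: inner_iunit)
  then show ?thesis by (simp add: iunit_iunit)
qed

lemma inner_iunit_right: "inner x (iunit (y::'a::complex_hilbert)) = - inner (iunit x) y"
  by (simp add: inner_iunit_left)

lemma inner_iunit_self[simp]: "inner x (iunit (x::'a::complex_hilbert)) = 0"
  using inner_iunit_left[of x x] by (simp add: inner_commute)

lemma inner_iunit_self'[simp]: "inner (iunit x) (x::'a::complex_hilbert) = 0"
  using inner_iunit_self[of x] by (simp add: inner_commute)

lemma cscale_add_right: "cscale c (x + y) = cscale c x + cscale c (y::'a::complex_hilbert)"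
  by (simp add: cscale_def iunit_add scaleR_add_right)

lemma cscale_add_left: "cscale (a + b) x = cscale a x + cscale b (x::'a::complex_hilbert)"
  by (simp add: cscale_def scaleR_add_left)

lemma cscale_zero_right[simp]: "cscale c (0::'a::complex_hilbert) = 0"
  by (simp add: cscale_def)

lemma cscale_zero_left[simp]: "cscale 0 (x::'a::complex_hilbert) = 0"
  by (simp add: cscale_def)

lemma cscale_one[simp]: "cscale 1 (x::'a::complex_hilbert) = x"
  by (simp add: cscale_def)

lemma cscale_ii: "cscale \<i> (x::'a::complex_hilbert) = iunit x"
  by (simp add: cscale_def)

lemma cscale_of_real: "cscale (complex_of_real r) (x::'a::complex_hilbert) = scaleR r x"
  by (simp add: cscale_def)

lemma iunit_cscale: "iunit (cscale c x) = cscale c (iunit (x::'a::complex_hilbert))"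
  by (simp add: cscale_def iunit_add iunit_scaleR iunit_iunit)

lemma cscale_mult: "cscale a (cscale b x) = cscale (a * b) (x::'a::complex_hilbert)"
  by (simp add: cscale_def iunit_add iunit_scaleR iunit_iunit algebra_simps)

lemma cscale_uminus_right: "cscale c (- x) = - cscale c (x::'a::complex_hilbert)"
  by (simp add: cscale_def)

lemma cscale_diff_right: "cscale c (x - y) = cscale c x - cscale c (y::'a::complex_hilbert)"
  by (simp add: cscale_def iunit_diff algebra_simps)

lemma cscale_scaleR: "cscale c (scaleR r x) = scaleR r (cscale c (x::'a::complex_hilbert))"
  by (simp add: cscale_def iunit_scaleR algebra_simps)

lemma norm_cscale[simp]: "norm (cscale c (x::'a::complex_hilbert)) = cmod c * norm x"
proof -
  have "(norm (cscale c x))\<^sup>2 = (Re c)\<^sup>2 * (norm x)\<^sup>2 + (Im c)\<^sup>2 * (norm x)\<^sup>2"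
    unfolding cscale_def power2_norm_eq_inner
    by (simp add: inner_add_left inner_add_right inner_iunit power2_eq_square algebra_simps)
  also have "\<dots> = (cmod c * norm x)\<^sup>2"
    by (simp add: cmod_def power_mult_distrib algebra_simps)
  finally show ?thesis by (simp add: power2_eq_iff_nonneg)
qed

lemma cinner_add_left: "cinner (x + y) z = cinner x z + cinner y (z::'a::complex_hilbert)"
  by (simp add: cinner_def iunit_add inner_add_left complex_eq_iff)

lemma cinner_add_right: "cinner z (x + y) = cinner z x + cinner z (y::'a::complex_hilbert)"
  by (simp add: cinner_def inner_add_right complex_eq_iff)

lemma cinner_diff_left: "cinner (x - y) z = cinner x z - cinner y (z::'a::complex_hilbert)"
  by (simp add: cinner_def iunit_diff inner_diff_left complex_eq_iff)

lemma cinner_diff_right: "cinner z (x - y) = cinner z x - cinner z (y::'a::complex_hilbert)"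
  by (simp add: cinner_def inner_diff_right complex_eq_iff)

lemma cinner_zero_left[simp]: "cinner 0 (x::'a::complex_hilbert) = 0"
  by (simp add: cinner_def complex_eq_iff)

lemma cinner_zero_right[simp]: "cinner x (0::'a::complex_hilbert) = 0"
  by (simp add: cinner_def complex_eq_iff)

lemma cinner_commute: "cinner x y = cnj (cinner y (x::'a::complex_hilbert))"
  by (simp add: cinner_def complex_eq_iff inner_commute inner_iunit_left)
    (metis inner_commute inner_iunit_left)

lemma cinner_cscale_left: "cinner (cscale c x) y = cnj c * cinner x (y::'a::complex_hilbert)"
proof -
  have "iunit (cscale c x) = scaleR (Re c) (iunit x) - scaleR (Im c) x"
    by (simp add: cscale_def iunit_add iunit_scaleR iunit_iunit)
  have "inner (cscale c x) y = Re c * inner x y + Im c * inner (iunit x) y"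
    by (simp add: cscale_def inner_add_left)
  moreover have "inner (iunit (cscale c x)) y = Re c * inner (iunit x) y - Im c * inner x y"
    unfolding \<open>iunit (cscale c x) = _\<close> by (simp add: inner_diff_left)
  ultimately show ?thesis unfolding cinner_def by (simp add: complex_eq_iff algebra_simps)
qed

lemma cinner_cscale_right: "cinner x (cscale c y) = c * cinner x (y::'a::complex_hilbert)"
  by (simp add: cinner_def cscale_def complex_eq_iff inner_add_right inner_iunit_right
      iunit_iunit algebra_simps)

lemma cinner_self: "cinner x (x::'a::complex_hilbert) = complex_of_real ((norm x)\<^sup>2)"
  by (simp add: cinner_def complex_eq_iff power2_norm_eq_inner)

lemma cinner_eq_zero_iff: "cinner x x = 0 \<longleftrightarrow> (x::'a::complex_hilbert) = 0"
  by (simp add: cinner_self)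

lemma cmod_cinner_le: "cmod (cinner x (y::'a::complex_hilbert)) \<le> norm x * norm y"
proof (cases "x = 0")
  case True then show ?thesis by simp
next
  case False
  define a where "a = inner x y"
  define b where "b = inner (iunit x) y"
  define n where "n = inner x x"
  have n: "n > 0" using False by (simp add: n_def)
  have nn: "inner (iunit x) (iunit x) = n" by (simp add: n_def inner_iunit)
  have e: "inner (scaleR n y - scaleR a x - scaleR b (iunit x)) (scaleR n y - scaleR a x - scaleR b (iunit x))
     = n*n*inner y y - 2*n*a*inner x y - 2*n*b*inner (iunit x) y + a*a*inner x x
       + b*b*inner (iunit x) (iunit x) + 2*a*b*inner x (iunit x)"
    by (simp add: inner_diff_left inner_diff_right algebra_simps inner_commute)
  have "0 \<le> inner (scaleR n y - scaleR a x - scaleR b (iunit x)) (scaleR n y - scaleR a x - scaleR b (iunit x))"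
    by simp
  also have "\<dots> = n * (n * inner y y - (a*a + b*b))"
    unfolding e nn by (simp add: a_def[symmetric] b_def[symmetric] n_def[symmetric] algebra_simps)
  finally have "0 \<le> n * inner y y - (a*a + b*b)" using n by (simp add: zero_le_mult_iff)
  then have "a\<^sup>2 + b\<^sup>2 \<le> n * (norm y)\<^sup>2" by (simp add: power2_norm_eq_inner) (simp add: power2_eq_square)
  then have "sqrt (a\<^sup>2 + b\<^sup>2) \<le> sqrt (n * (norm y)\<^sup>2)" by simp
  also have "\<dots> = norm x * norm y" by (simp add: n_def real_sqrt_mult norm_eq_sqrt_inner)
  finally show ?thesis by (simp add: cmod_def cinner_def a_def b_def)
qed

lemma bop_linear: "bop T \<Longrightarrow> bounded_linear T" by (simp add: bop_def)
lemma bop_iunit: "bop T \<Longrightarrow> T (iunit x) = iunit (T x)" by (simp add: bop_def)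

lemma bop_cscale: assumes "bop T" shows "T (cscale c x) = cscale c (T x)"
proof -
  interpret bounded_linear T using assms by (simp add: bop_def)
  show ?thesis using assms by (simp add: cscale_def add scale bop_iunit)
qed

lemma bopI: "bounded_linear T \<Longrightarrow> (\<And>x. T (iunit x) = iunit (T x)) \<Longrightarrow> bop T"
  by (simp add: bop_def)

lemma bop_comp: "bop S \<Longrightarrow> bop T \<Longrightarrow> bop (\<lambda>x. S (T x))"
  unfolding bop_def using bounded_linear_compose[of S T] by (auto simp: o_def)

lemma is_adj_iff:
  assumes "bop T" "bop A"
  shows "is_adj T A \<longleftrightarrow> (\<forall>x y. inner (T x) y = inner x (A y))"
proof
  assume "is_adj T A" then show "\<forall>x y. inner (T x) y = inner x (A y)"
    by (auto simp: is_adj_def cinner_def complex_eq_iff)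
next
  assume h: "\<forall>x y. inner (T x) y = inner x (A y)"
  show "is_adj T A" unfolding is_adj_def cinner_def
  proof (intro allI)
    fix x y
    have "inner (iunit (T x)) y = inner (iunit x) (A y)"
      using h bop_iunit[OF assms(1), of x] by (metis)
    then show "Complex (inner (T x) y) (inner (iunit (T x)) y) = Complex (inner x (A y)) (inner (iunit x) (A y))"
      using h by simp
  qed
qed

instantiation prod :: (complex_hilbert, complex_hilbert) complex_hilbert
begin
definition iunit_prod_def: "iunit x = (iunit (fst x), iunit (snd x))"
instance
  by standard (auto simp: iunit_prod_def iunit_add iunit_scaleR iunit_iunit inner_iunit inner_prod_def)
end

lemma fst_iunit[simp]: "fst (iunit p) = iunit (fst p)" by (simp add: iunit_prod_def)
lemma snd_iunit[simp]: "snd (iunit p) = iunit (snd p)" by (simp add: iunit_prod_def)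
lemma iunit_Pair[simp]: "iunit (a, b) = (iunit a, iunit b)" by (simp add: iunit_prod_def)
lemma cscale_Pair[simp]: "cscale c (a, b) = (cscale c a, cscale c b)" by (simp add: cscale_def)
lemma cinner_Pair[simp]: "cinner (a, b) (c, d) = cinner a c + cinner b d"
  by (simp add: cinner_def complex_eq_iff)


section \<open>Orthogonal projection onto closed subspaces\<close>

lemma proj_exists:
  fixes M :: "'a::{real_inner,complete_space} set"
  assumes sub: "subspace M" and cl: "closed M"
  shows "\<exists>p\<in>M. \<forall>m\<in>M. inner (x - p) m = 0"
proof -
  define \<delta> where "\<delta> = Inf ((\<lambda>m. (norm (x - m))\<^sup>2) ` M)"
  have M0: "0 \<in> M" using sub by (simp add: subspace_0)
  have bdd: "bdd_below ((\<lambda>m. (norm (x - m))\<^sup>2) ` M)" by (rule bdd_belowI[of _ 0]) auto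
  have le: "\<delta> \<le> (norm (x - m))\<^sup>2" if "m \<in> M" for m
    unfolding \<delta>_def using bdd that by (simp add: cInf_lower)
  have "\<exists>m\<in>M. (norm (x - m))\<^sup>2 < \<delta> + 1 / (real n + 1)" for n
  proof -
    have "Inf ((\<lambda>m. (norm (x - m))\<^sup>2) ` M) < \<delta> + 1 / (real n + 1)"
      unfolding \<delta>_def by simp
    then show ?thesis using M0 by (subst (asm) cInf_less_iff) (auto simp: bdd)
  qed
  then obtain s where sM: "\<And>n. s n \<in> M" and sd: "\<And>n. (norm (x - s n))\<^sup>2 < \<delta> + 1 / (real n + 1)"
    by metis
  have par: "(norm (s j - s k))\<^sup>2 \<le> 2 / (real j + 1) + 2 / (real k + 1)" for j k
  proof -
    define a where "a = x - s j"
    define b where "b = x - s k"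
    have mid: "scaleR (1/2) (s j + s k) \<in> M"
      using sM sub by (simp add: subspace_add subspace_scale)
    have "(norm (a + b))\<^sup>2 = 4 * (norm (x - scaleR (1/2) (s j + s k)))\<^sup>2"
    proof -
      have "a + b = scaleR 2 (x - scaleR (1/2) (s j + s k))"
        by (simp add: a_def b_def algebra_simps scaleR_2)
      then show ?thesis by (simp add: power_mult_distrib)
    qed
    also have "\<dots> \<ge> 4 * \<delta>" using le[OF mid] by simp
    finally have ab: "(norm (a + b))\<^sup>2 \<ge> 4 * \<delta>" .
    have pl: "(norm (a - b))\<^sup>2 + (norm (a + b))\<^sup>2 = 2 * (norm a)\<^sup>2 + 2 * (norm b)\<^sup>2"
      unfolding power2_norm_eq_inner
      by (simp add: inner_add_left inner_add_right inner_diff_left inner_diff_right inner_commute)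
    have "a - b = s k - s j" by (simp add: a_def b_def)
    then have "(norm (s j - s k))\<^sup>2 = (norm (a - b))\<^sup>2" by (simp add: norm_minus_commute)
    then show ?thesis using pl ab sd[of j] sd[of k] unfolding a_def b_def by linarith
  qed
  have "Cauchy s"
  proof (rule metric_CauchyI)
    fix e :: real assume e: "e > 0"
    obtain N :: nat where N: "4 / e\<^sup>2 < real N" using reals_Archimedean2 by blast
    have "dist (s j) (s k) < e" if "j \<ge> N" "k \<ge> N" for j k
    proof -
      have e2: "e\<^sup>2 > 0" using e by simp
      have "2 / (real j + 1) \<le> 2 / (real N + 1)" using that by (simp add: frac_le)
      moreover have "2 / (real k + 1) \<le> 2 / (real N + 1)" using that by (simp add: frac_le)
      moreover have "4 / (real N + 1) < e\<^sup>2"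
      proof -
        have "4 < e\<^sup>2 * real N" using N e2 by (simp add: divide_less_eq mult.commute)
        moreover have "e\<^sup>2 * (real N + 1) = e\<^sup>2 * real N + e\<^sup>2" by (simp add: algebra_simps)
        ultimately have "4 < e\<^sup>2 * (real N + 1)" using e2 by linarith
        then show ?thesis by (simp add: divide_less_eq)
      qed
      ultimately have "(norm (s j - s k))\<^sup>2 < e\<^sup>2" using par[of j k] by linarith
      then show ?thesis using e by (simp add: dist_norm power_less_imp_less_base)
    qed
    then show "\<exists>M. \<forall>m\<ge>M. \<forall>n\<ge>M. dist (s m) (s n) < e" by blast
  qed
  then obtain p where sp: "s \<longlonglongrightarrow> p" using Cauchy_convergent_iff convergent_def by blast
  have pM: "p \<in> M" using cl sM sp closed_sequentially by blast
  have "(\<lambda>n. (norm (x - s n))\<^sup>2) \<longlonglongrightarrow> (norm (x - p))\<^sup>2"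
    by (intro tendsto_intros sp)
  moreover have "(\<lambda>n. \<delta> + 1 / (real n + 1)) \<longlonglongrightarrow> \<delta> + 0"
    by (intro tendsto_intros) (use LIMSEQ_inverse_real_of_nat in \<open>simp add: inverse_eq_divide add.commute\<close>)
  ultimately have pd: "(norm (x - p))\<^sup>2 \<le> \<delta>"
    using sd by (auto intro: LIMSEQ_le[where X="\<lambda>n. (norm (x - s n))\<^sup>2"] less_imp_le)
  have "inner (x - p) m = 0" if mM: "m \<in> M" for m
  proof (cases "m = 0")
    case True then show ?thesis by simp
  next
    case False
    define c where "c = inner (x - p) m"
    define t where "t = c / inner m m"
    have mm: "inner m m > 0" using False by simp
    have "p + scaleR t m \<in> M" using pM mM sub by (simp add: subspace_add subspace_scale)
    then have "(norm (x - p))\<^sup>2 \<le> (norm (x - (p + scaleR t m)))\<^sup>2" using pd le by (meson order_trans)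
    also have "(norm (x - (p + scaleR t m)))\<^sup>2 = (norm (x - p))\<^sup>2 - 2 * t * c + t * t * inner m m"
      unfolding power2_norm_eq_inner c_def
      by (simp add: inner_diff_left inner_diff_right inner_add_left inner_add_right inner_commute algebra_simps)
    also have "t * t * inner m m = t * c" using mm by (simp add: t_def)
    finally have "0 \<le> - t * c" by (simp add: mult.commute)
    then have "c * c / inner m m \<le> 0" by (simp add: t_def)
    then have "c * c \<le> 0" using mm by (simp add: divide_le_0_iff)
    then show ?thesis unfolding c_def by (simp add: mult_le_0_iff) (metis mult_eq_0_iff not_square_less_zero order_antisym_conv)
  qed
  then show ?thesis using pM by blast
qed

definition proj :: "'a::{real_inner,complete_space} set \<Rightarrow> 'a \<Rightarrow> 'a" where
  "proj M x = (SOME p. p \<in> M \<and> (\<forall>m\<in>M. inner (x - p) m = 0))"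

locale csub =
  fixes M :: "'a::{real_inner,complete_space} set"
  assumes sub: "subspace M" and cl: "closed M"
begin

lemma proj_prop: "proj M x \<in> M \<and> (\<forall>m\<in>M. inner (x - proj M x) m = 0)"
  unfolding proj_def by (rule someI_ex) (use proj_exists[OF sub cl] in blast)

lemma proj_in: "proj M x \<in> M" using proj_prop by blast
lemma proj_orth: "m \<in> M \<Longrightarrow> inner (x - proj M x) m = 0" using proj_prop by blast

lemma proj_unique: assumes "p \<in> M" "\<And>m. m \<in> M \<Longrightarrow> inner (x - p) m = 0" shows "proj M x = p"
proof -
  have d: "proj M x - p \<in> M" using assms(1) proj_in sub by (simp add: subspace_diff)
  have "inner (proj M x - p) (proj M x - p) = inner (x - p) (proj M x - p) - inner (x - proj M x) (proj M x - p)"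
    by (simp add: inner_diff_left)
  also have "\<dots> = 0" using assms(2)[OF d] proj_orth[OF d] by simp
  finally show ?thesis by simp
qed

lemma proj_id: "x \<in> M \<Longrightarrow> proj M x = x"
  by (rule proj_unique) auto

lemma proj_add: "proj M (x + y) = proj M x + proj M y"
  by (rule proj_unique) (auto simp: subspace_add[OF sub] proj_in algebra_simps inner_diff_left
      proj_orth[unfolded inner_diff_left] simp flip: diff_diff_eq2)

lemma proj_scale: "proj M (scaleR r x) = scaleR r (proj M x)"
proof (rule proj_unique)
  show "scaleR r (proj M x) \<in> M" using sub proj_in by (simp add: subspace_scale)
  fix m assume "m \<in> M"
  then show "inner (scaleR r x - scaleR r (proj M x)) m = 0"
    using proj_orth[of m x] by (simp add: scaleR_diff_right[symmetric])
qed

lemma proj_linear: "linear (proj M)"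
  by (rule linearI) (simp_all add: proj_add proj_scale)

lemma proj_pyth: "(norm x)\<^sup>2 = (norm (proj M x))\<^sup>2 + (norm (x - proj M x))\<^sup>2"
proof -
  have o: "inner (x - proj M x) (proj M x) = 0" by (rule proj_orth[OF proj_in])
  have "(norm (proj M x + (x - proj M x)))\<^sup>2 = (norm (proj M x))\<^sup>2 + (norm (x - proj M x))\<^sup>2"
    unfolding power2_norm_eq_inner using o
    by (simp only: inner_add_left inner_add_right inner_commute)
  then show ?thesis by simp
qed

lemma proj_norm: "norm (proj M x) \<le> norm x"
  using proj_pyth[of x] by (metis abs_norm_cancel le_add_same_cancel1 power2_le_imp_le zero_le_power2 norm_ge_zero)

lemma proj_bounded_linear: "bounded_linear (proj M)"
  by (rule bounded_linear_intro[where K=1]) (simp_all add: proj_add proj_scale proj_norm)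

lemma proj_selfadj: "inner (proj M x) y = inner x (proj M y)"
proof -
  have "inner (proj M x) y = inner (proj M x) (proj M y)"
    using proj_orth[OF proj_in, of y x] by (simp add: inner_diff_right inner_commute)
  also have "\<dots> = inner x (proj M y)"
    using proj_orth[OF proj_in, of x y] by (simp add: inner_diff_left)
  finally show ?thesis .
qed

lemma proj_zero: "(\<And>m. m \<in> M \<Longrightarrow> inner x m = 0) \<Longrightarrow> proj M x = 0"
  by (rule proj_unique) (auto simp: subspace_0[OF sub])

lemma proj_proj: "proj M (proj M x) = proj M x" by (rule proj_id[OF proj_in])

lemma proj_orth_compl: "m \<in> M \<Longrightarrow> inner m (x - proj M x) = 0"
  using proj_orth by (simp add: inner_commute)

end

lemma csub_iunit:
  fixes M :: "'a::complex_hilbert set"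
  assumes "csub M" "\<And>m. m \<in> M \<Longrightarrow> iunit m \<in> M"
  shows "proj M (iunit x) = iunit (proj M x)"
proof -
  interpret csub M by fact
  show ?thesis
  proof (rule proj_unique)
    show "iunit (proj M x) \<in> M" using assms(2) proj_in by blast
    fix m assume m: "m \<in> M"
    have "inner (iunit x - iunit (proj M x)) m = - inner (x - proj M x) (iunit m)"
      by (simp add: iunit_diff[symmetric] inner_iunit_left)
    also have "\<dots> = 0" using proj_orth assms(2)[OF m] by simp
    finally show "inner (iunit x - iunit (proj M x)) m = 0" .
  qed
qed

section \<open>Riesz representation and adjoints\<close>

lemma riesz:
  fixes f :: "'a::{real_inner,complete_space} \<Rightarrow> real"
  assumes bl: "bounded_linear f"
  shows "\<exists>y. \<forall>x. f x = inner y x"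
proof (cases "\<forall>x. f x = 0")
  case True then show ?thesis by (intro exI[of _ 0]) simp
next
  case False
  then obtain z where z: "f z \<noteq> 0" by blast
  interpret f: bounded_linear f by fact
  define N where "N = {x. f x = 0}"
  have subN: "subspace N" unfolding N_def subspace_def by (simp add: f.add f.scale f.zero)
  have clN: "closed N" unfolding N_def
    by (rule closed_Collect_eq) (auto intro: continuous_intros bounded_linear.continuous_on[OF bl])
  interpret N: csub N using subN clN by unfold_locales
  define w where "w = z - proj N z"
  have fw: "f w = f z" using N.proj_in[of z] by (simp add: w_def f.diff N_def)
  have wN: "\<And>m. m \<in> N \<Longrightarrow> inner w m = 0" unfolding w_def by (rule N.proj_orth)
  have w0: "w \<noteq> 0" using fw z by auto
  show ?thesis
  proof (intro exI allI)
    fix x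
    have "x - scaleR (f x / f w) w \<in> N" using fw z by (simp add: N_def f.diff f.scale)
    then have "inner w (x - scaleR (f x / f w) w) = 0" by (rule wN)
    then have "inner w x = (f x / f w) * inner w w" by (simp add: inner_diff_right)
    then show "f x = inner (scaleR (f w / inner w w) w) x"
      using w0 fw z by (simp add: field_simps)
  qed
qed

lemma inner_ext: "(\<And>x. inner a x = inner b (x::'a::real_inner)) \<Longrightarrow> a = b"
  by (metis inner_diff_left right_minus_eq inner_eq_zero_iff)

lemma inner_ext': "(\<And>x. inner x a = inner x (b::'a::real_inner)) \<Longrightarrow> a = b"
  by (metis inner_commute inner_ext)

lemma adjoint_exists:
  fixes T :: "'a::{real_inner,complete_space} \<Rightarrow> 'a"
  assumes bl: "bounded_linear T"
  shows "\<exists>A. bounded_linear A \<and> (\<forall>x y. inner (T x) y = inner x (A y))"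
proof -
  interpret T: bounded_linear T by fact
  have "\<forall>y. \<exists>z. \<forall>x. inner (T x) y = inner z x"
  proof
    fix y
    have "bounded_linear (\<lambda>x. inner (T x) y)"
      using bounded_linear_compose[OF bounded_linear_inner_left bl] by (simp add: o_def)
    then show "\<exists>z. \<forall>x. inner (T x) y = inner z x" by (rule riesz)
  qed
  then obtain A where A: "\<And>x y. inner (T x) y = inner (A y) x" by metis
  have A': "\<And>x y. inner (T x) y = inner x (A y)" using A by (simp add: inner_commute)
  have lin: "linear A"
  proof (rule linearI)
    fix a b show "A (a + b) = A a + A b"
      by (rule inner_ext') (simp add: A'[symmetric] inner_add_right)
  next
    fix r a show "A (scaleR r a) = scaleR r (A a)"
      by (rule inner_ext') (simp add: A'[symmetric])
  qed
  obtain K where K: "\<And>x. norm (T x) \<le> norm x * K" "K > 0" using T.pos_bounded by blast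
  have "norm (A y) \<le> norm y * K" for y
  proof (cases "A y = 0")
    case True then show ?thesis using K by simp
  next
    case False
    have "(norm (A y))\<^sup>2 = inner (T (A y)) y" by (simp add: A' power2_norm_eq_inner)
    also have "\<dots> \<le> norm (T (A y)) * norm y" by (rule norm_cauchy_schwarz)
    also have "\<dots> \<le> norm (A y) * K * norm y" using K by (simp add: mult_right_mono)
    finally have "norm (A y) * norm (A y) \<le> norm (A y) * (norm y * K)"
      by (simp add: power2_eq_square algebra_simps)
    then show ?thesis using False by simp
  qed
  then have "bounded_linear A"
    by (intro bounded_linear_intro[where K=K]) (simp_all add: linear_add[OF lin] linear_scale[OF lin])
  then show ?thesis using A' by blast
qed

lemma bop_adjoint_exists:
  fixes T :: "'a::complex_hilbert \<Rightarrow> 'a"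
  assumes "bop T"
  shows "\<exists>A. bop A \<and> is_adj T A \<and> (\<forall>x y. inner (T x) y = inner x (A y))"
proof -
  obtain A where A: "bounded_linear A" "\<And>x y. inner (T x) y = inner x (A y)"
    using adjoint_exists bop_linear[OF assms] by blast
  have "A (iunit y) = iunit (A y)" for y
  proof (rule inner_ext')
    fix x
    have "inner x (A (iunit y)) = inner (T x) (iunit y)" by (simp add: A)
    also have "\<dots> = - inner (iunit (T x)) y" by (simp add: inner_iunit_right)
    also have "\<dots> = - inner (T (iunit x)) y" by (simp add: bop_iunit[OF assms])
    also have "\<dots> = inner x (iunit (A y))" by (simp add: A inner_iunit_right)
    finally show "inner x (A (iunit y)) = inner x (iunit (A y))" .
  qed
  then have "bop A" using A by (simp add: bop_def)
  then show ?thesis using is_adj_iff[OF assms] A by blast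
qed


section \<open>A Banach algebra of operators\<close>

typedef (overloaded) 'a opr = "UNIV :: ('a::real_normed_vector \<Rightarrow>\<^sub>L 'a) set"
  morphisms bl Opr by simp

setup_lifting type_definition_opr

instantiation opr :: (real_normed_vector) real_normed_vector
begin
lift_definition norm_opr :: "'a opr \<Rightarrow> real" is norm .
lift_definition minus_opr :: "'a opr \<Rightarrow> 'a opr \<Rightarrow> 'a opr" is "(-)" .
lift_definition plus_opr :: "'a opr \<Rightarrow> 'a opr \<Rightarrow> 'a opr" is "(+)" .
lift_definition uminus_opr :: "'a opr \<Rightarrow> 'a opr" is "uminus" .
lift_definition zero_opr :: "'a opr" is 0 .
lift_definition scaleR_opr :: "real \<Rightarrow> 'a opr \<Rightarrow> 'a opr" is scaleR .
definition dist_opr :: "'a opr \<Rightarrow> 'a opr \<Rightarrow> real" where "dist_opr a b = norm (a - b)"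
definition uniformity_opr :: "('a opr \<times> 'a opr) filter"
  where "uniformity_opr = (INF e\<in>{0 <..}. principal {(x, y). dist x y < e})"
definition open_opr :: "'a opr set \<Rightarrow> bool"
  where "open_opr S = (\<forall>x\<in>S. \<forall>\<^sub>F (x', y) in uniformity. x' = x \<longrightarrow> y \<in> S)"
definition sgn_opr :: "'a opr \<Rightarrow> 'a opr" where "sgn_opr x = scaleR (inverse (norm x)) x"
instance
  apply standard
  unfolding dist_opr_def open_opr_def sgn_opr_def uniformity_opr_def
  apply (rule refl | (transfer, force simp: norm_triangle_ineq algebra_simps))+
  done
end

instantiation opr :: (real_normed_vector) "{real_normed_algebra, monoid_mult}"
begin
lift_definition times_opr :: "'a opr \<Rightarrow> 'a opr \<Rightarrow> 'a opr" is blinfun_compose .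
lift_definition one_opr :: "'a opr" is id_blinfun .
instance
  apply standard
  apply (transfer; ((rule blinfun_eqI, simp add: blinfun.bilinear_simps) | rule norm_blinfun_compose))+
  done
end

lemma norm_opr_bl: "norm (x::'a::real_normed_vector opr) = norm (bl x)"
  by transfer simp

lemma dist_opr_bl: "dist (x::'a::real_normed_vector opr) y = dist (bl x) (bl y)"
  by (simp add: dist_norm norm_opr_bl minus_opr.rep_eq)

instance opr :: (banach) banach
proof
  fix X :: "nat \<Rightarrow> 'a opr"
  assume "Cauchy X"
  then have "Cauchy (\<lambda>n. bl (X n))" unfolding Cauchy_def by (simp add: dist_opr_bl)
  then obtain L where L: "(\<lambda>n. bl (X n)) \<longlonglongrightarrow> L" using Cauchy_convergent_iff convergent_def by blast
  have "X \<longlonglongrightarrow> Opr L"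
    using L unfolding lim_sequentially by (simp add: dist_opr_bl Opr_inverse)
  then show "convergent X" by (auto simp: convergent_def)
qed

definition app :: "'a::real_normed_vector opr \<Rightarrow> 'a \<Rightarrow> 'a" where
  "app F x = blinfun_apply (bl F) x"

lemma app_mult[simp]: "app (F * G) x = app F (app G x)"
  by (simp add: app_def times_opr.rep_eq)
lemma app_one[simp]: "app 1 x = x"
  by (simp add: app_def one_opr.rep_eq)
lemma app_add[simp]: "app (F + G) x = app F x + app G x"
  by (simp add: app_def plus_opr.rep_eq blinfun.bilinear_simps)
lemma app_diff[simp]: "app (F - G) x = app F x - app G x"
  by (simp add: app_def minus_opr.rep_eq blinfun.bilinear_simps)
lemma app_scaleR[simp]: "app (scaleR r F) x = scaleR r (app F x)"
  by (simp add: app_def scaleR_opr.rep_eq blinfun.bilinear_simps)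
lemma app_norm: "norm (app F x) \<le> norm F * norm x"
  by (simp add: app_def norm_opr_bl norm_blinfun)
lemma bounded_linear_app: "bounded_linear (app F)"
  unfolding app_def by (rule blinfun.bounded_linear_right)
lemma bounded_linear_app_left: "bounded_linear (\<lambda>F. app F x)"
  by (rule bounded_linear_intro[where K="norm x"]) (auto simp: mult.commute intro: app_norm[THEN order_trans])

definition mkop :: "('a::real_normed_vector \<Rightarrow> 'a) \<Rightarrow> 'a opr" where
  "mkop f = Opr (Blinfun f)"

lemma app_mkop: "bounded_linear f \<Longrightarrow> app (mkop f) = f"
  by (rule ext) (simp add: app_def mkop_def Opr_inverse bounded_linear_Blinfun_apply)

lemma norm_opr_le: "0 \<le> b \<Longrightarrow> (\<And>x. norm (app F x) \<le> b * norm x) \<Longrightarrow> norm F \<le> b"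
  unfolding norm_opr_bl app_def by (rule norm_blinfun_bound)

lemma app_suminf:
  fixes a :: "nat \<Rightarrow> 'a::banach opr"
  assumes "summable (\<lambda>k. norm (a k))"
  shows "app (suminf a) x = (\<Sum>k. app (a k) x)" and "summable (\<lambda>k. app (a k) x)"
proof -
  have s: "summable a" using assms summable_norm_cancel by blast
  interpret bounded_linear "\<lambda>F. app F x" by (rule bounded_linear_app_left)
  show "app (suminf a) x = (\<Sum>k. app (a k) x)" using suminf[OF s] by simp
  show "summable (\<lambda>k. app (a k) x)" using summable[OF s] .
qed

section \<open>Binomial coefficients for the square root\<close>

definition cc :: "nat \<Rightarrow> real" where "cc k = (-1)^k * ((1/2::real) gchoose k)"

lemma cc_conv: "(\<Sum>i\<le>m. cc i * cc (m - i)) = (if m = 0 then 1 else if m = 1 then -1 else 0)"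
proof -
  have pw: "cc i * cc (m - i) = (-1)^m * (((1/2::real) gchoose i) * ((1/2) gchoose (m - i)))"
    if "i \<le> m" for i
  proof -
    have "(-1::real)^i * (-1)^(m-i) = (-1)^m" using that by (simp add: power_add[symmetric])
    then show ?thesis unfolding cc_def by (simp add: algebra_simps)
  qed
  have "(\<Sum>i\<le>m. cc i * cc (m - i)) = (\<Sum>i\<le>m. (-1)^m * (((1/2::real) gchoose i) * ((1/2) gchoose (m - i))))"
    by (rule sum.cong) (auto simp: pw)
  also have "\<dots> = (-1)^m * (\<Sum>i\<le>m. ((1/2::real) gchoose i) * ((1/2) gchoose (m - i)))"
    by (simp add: sum_distrib_left)
  also have "(\<Sum>i\<le>m. ((1/2::real) gchoose i) * ((1/2) gchoose (m - i))) = (1::real) gchoose m"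
    using gbinomial_Vandermonde[of "1/2::real" "1/2" m] by (simp add: atMost_atLeast0)
  also have "(1::real) gchoose m = of_nat (1 choose m)"
    using of_nat_gbinomial[of "1::nat" m, where 'a=real] gbinomial_binomial[of "1::nat" m] by simp
  finally show ?thesis by (cases m) (auto simp: binomial_eq_0)
qed

lemma prod_pos_aux: "(\<And>i. i \<in> A \<Longrightarrow> f i > (0::real)) \<Longrightarrow> finite A \<Longrightarrow> prod f A > 0"
  by (simp add: prod_pos)

lemma cc_nonpos: assumes "k \<ge> 1" shows "cc k \<le> 0"
proof -
  have "cc k = ((of_nat k - 1/2 - 1) gchoose k)"
    unfolding cc_def by (subst gbinomial_negated_upper) (simp add: power_mult_distrib[symmetric] algebra_simps)
  also have "fact k * \<dots> = (\<Prod>i = 0..<k. (of_nat k - 1/2 - 1) - of_nat i)"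
    by (rule gbinomial_mult_fact)
  also have "\<dots> = (\<Prod>i = 0..<k-1. (of_nat k - 3/2) - of_nat i) * ((of_nat k - 3/2) - of_nat (k-1))"
    using assms by (cases k) (auto simp: algebra_simps)
  also have "\<dots> \<le> 0"
  proof (rule mult_nonneg_nonpos)
    show "0 \<le> (\<Prod>i = 0..<k-1. (of_nat k - 3/2) - of_nat i :: real)"
      by (rule prod_nonneg) (auto simp: of_nat_diff)
    show "(of_nat k - 3/2) - of_nat (k-1) \<le> (0::real)" using assms by (simp add: of_nat_diff)
  qed
  finally show ?thesis using fact_gt_zero[where 'a=real, of k] by (auto simp: mult_le_0_iff)
qed

lemma cc_partial: "(\<Sum>k\<le>m. cc k) \<ge> 0"
proof -
  have "(\<Sum>k\<le>m. cc k) = (\<Sum>k\<le>m. ((1/2::real) gchoose k) * (-1)^k)"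
    by (simp add: cc_def mult.commute)
  also have "\<dots> = (-1)^m * ((1/2 - 1) gchoose m)" by (rule gbinomial_sum_lower_neg)
  also have "\<dots> = (of_nat m - (1/2 - 1) - 1) gchoose m"
    by (subst gbinomial_negated_upper) (simp add: power_mult_distrib[symmetric])
  also have "\<dots> \<ge> 0"
  proof -
    have "fact m * ((of_nat m - (1/2 - 1) - 1) gchoose m) = (\<Prod>i = 0..<m. (of_nat m - (1/2 - 1) - 1) - of_nat i :: real)"
      by (rule gbinomial_mult_fact)
    also have "\<dots> \<ge> 0" by (rule prod_nonneg) auto
    finally show ?thesis using fact_gt_zero[where 'a=real, of m] by (auto simp: zero_le_mult_iff)
  qed
  finally show ?thesis .
qed

lemma cc0[simp]: "cc 0 = 1" by (simp add: cc_def)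

lemma cc_abs_summable: "summable (\<lambda>k. \<bar>cc k\<bar>)"
proof (rule summableI_nonneg_bounded[where x=2])
  fix n
  have "(\<Sum>k<n. \<bar>cc k\<bar>) \<le> (\<Sum>k\<le>n. \<bar>cc k\<bar>)" by (rule sum_mono2) auto
  also have "(\<Sum>k\<le>n. \<bar>cc k\<bar>) = 2 - (\<Sum>k\<le>n. cc k)"
  proof (induction n)
    case 0 then show ?case by simp
  next
    case (Suc n) then show ?case using cc_nonpos[of "Suc n"] by simp
  qed
  also have "\<dots> \<le> 2" using cc_partial[of n] by simp
  finally show "(\<Sum>k<n. \<bar>cc k\<bar>) \<le> 2" .
qed simp

section \<open>Square root of I - X\<close>

lemma app_power_iunit:
  fixes Xo :: "'a::complex_hilbert opr"
  assumes "\<And>x. app Xo (iunit x) = iunit (app Xo x)"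
  shows "app (Xo ^ k) (iunit x) = iunit (app (Xo ^ k) x)"
  by (induction k arbitrary: x) (simp_all add: assms)

lemma app_power_sa:
  fixes Xo :: "'a::complex_hilbert opr"
  assumes "\<And>x y. inner (app Xo x) y = inner x (app Xo y)"
  shows "inner (app (Xo ^ k) x) y = inner x (app (Xo ^ k) y)"
proof (induction k arbitrary: x)
  case 0 then show ?case by simp
next
  case (Suc k)
  have "inner (app (Xo ^ Suc k) x) y = inner (app (Xo ^ k) (app Xo x)) y"
    by (simp only: power_Suc2 app_mult)
  also have "\<dots> = inner (app Xo x) (app (Xo ^ k) y)" using Suc by simp
  also have "\<dots> = inner x (app Xo (app (Xo ^ k) y))" using assms by simp
  also have "\<dots> = inner x (app (Xo ^ Suc k) y)" by (simp only: power_Suc app_mult)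
  finally show ?case .
qed

lemma sqrt_exists:
  fixes X :: "'a::complex_hilbert \<Rightarrow> 'a"
  assumes bX: "bop X" and sa: "\<And>x y. inner (X x) y = inner x (X y)"
    and contr: "\<And>x. norm (X x) \<le> norm x"
  shows "\<exists>D. bop D \<and> (\<forall>x y. inner (D x) y = inner x (D y)) \<and> (\<forall>x. D (D x) = x - X x)"
proof -
  define Xo where "Xo = mkop X"
  have aX: "app Xo = X" unfolding Xo_def by (rule app_mkop[OF bop_linear[OF bX]])
  have nX: "norm Xo \<le> 1" by (rule norm_opr_le) (auto simp: aX contr)
  have np: "norm (Xo ^ k) \<le> 1" for k
  proof (induction k)
    case 0 show ?case by (rule norm_opr_le) auto
  next
    case (Suc k)
    have "norm (Xo ^ Suc k) \<le> norm Xo * norm (Xo ^ k)" by (simp add: norm_mult_ineq)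
    also have "\<dots> \<le> 1 * 1" using nX Suc by (intro mult_mono) auto
    finally show ?case by simp
  qed
  define a where "a k = scaleR (cc k) (Xo ^ k)" for k
  have na: "norm (a k) \<le> \<bar>cc k\<bar>" for k
    using np[of k] by (simp add: a_def mult_left_le)
  have sa': "summable (\<lambda>k. norm (a k))"
    by (rule summable_comparison_test[OF _ cc_abs_summable]) (auto intro: na)
  define Do where "Do = suminf a"
  have "Do * Do = (\<Sum>k. \<Sum>i\<le>k. a i * a (k - i))"
    unfolding Do_def by (rule Cauchy_product[OF sa' sa'])
  also have "(\<lambda>k. \<Sum>i\<le>k. a i * a (k - i)) = (\<lambda>k. scaleR (\<Sum>i\<le>k. cc i * cc (k - i)) (Xo ^ k))"
  proof
    fix k
    have "a i * a (k - i) = scaleR (cc i * cc (k - i)) (Xo ^ k)" if "i \<le> k" for i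
      using that by (simp add: a_def power_add[symmetric])
    then show "(\<Sum>i\<le>k. a i * a (k - i)) = scaleR (\<Sum>i\<le>k. cc i * cc (k - i)) (Xo ^ k)"
      by (simp add: scaleR_sum_left)
  qed
  also have "\<dots> = (\<lambda>k. scaleR (if k = 0 then 1 else if k = 1 then -1 else 0) (Xo ^ k))"
    by (simp only: cc_conv)
  also have "suminf \<dots> = 1 - Xo"
  proof -
    have "(\<lambda>k. scaleR (if k = 0 then 1 else if k = 1 then -1 else 0) (Xo ^ k)) sums
          (\<Sum>k\<in>{0,1}. scaleR (if k = 0 then 1 else if k = 1 then -1 else 0) (Xo ^ k))"
      by (rule sums_finite) auto
    then show ?thesis by (simp add: sums_iff)
  qed
  finally have DD: "Do * Do = 1 - Xo" .
  define D where "D = app Do"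
  have Dx: "D x = (\<Sum>k. cc k *\<^sub>R app (Xo ^ k) x)" for x
    unfolding D_def Do_def using app_suminf(1)[OF sa', of x] by (simp add: a_def[abs_def])
  have Ds: "summable (\<lambda>k. cc k *\<^sub>R app (Xo ^ k) x)" for x
    using app_suminf(2)[OF sa'] by (simp add: a_def[abs_def])
  have DDx: "D (D x) = x - X x" for x
    using DD unfolding D_def by (metis app_diff app_mult app_one aX)
  have iX: "app Xo (iunit x) = iunit (app Xo x)" for x using aX bop_iunit[OF bX] by simp
  have saX: "inner (app Xo x) y = inner x (app Xo y)" for x y using aX sa by simp
  have "D (iunit x) = iunit (D x)" for x
  proof -
    have "D (iunit x) = (\<Sum>k. iunit (cc k *\<^sub>R app (Xo ^ k) x))"
      unfolding Dx by (simp add: app_power_iunit[OF iX] iunit_scaleR)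
    also have "\<dots> = iunit (D x)"
      unfolding Dx by (rule bounded_linear.suminf[OF bounded_linear_iunit Ds, symmetric])
    finally show ?thesis .
  qed
  moreover have "bounded_linear D" unfolding D_def by (rule bounded_linear_app)
  moreover have "inner (D x) y = inner x (D y)" for x y
  proof -
    have "inner (D x) y = (\<Sum>k. inner (cc k *\<^sub>R app (Xo ^ k) x) y)"
      unfolding Dx by (rule bounded_linear.suminf[OF bounded_linear_inner_left Ds])
    also have "\<dots> = (\<Sum>k. inner x (cc k *\<^sub>R app (Xo ^ k) y))"
      by (simp add: app_power_sa[OF saX])
    also have "\<dots> = inner x (D y)"
      unfolding Dx by (rule bounded_linear.suminf[OF bounded_linear_inner_right Ds, symmetric])
    finally show ?thesis .
  qed
  ultimately show ?thesis using DDx by (auto simp: bop_def)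
qed


section \<open>Partial isometries and the unitary G\<close>

lemma closure_subspace:
  fixes S :: "'a::real_normed_vector set"
  assumes "subspace S" shows "subspace (closure S)"
proof -
  have c: "continuous_on (closure (S \<times> S)) (\<lambda>p. fst p + snd p)"
    by (intro continuous_intros)
  have "(\<lambda>p. fst p + snd p) ` (S \<times> S) \<subseteq> closure S"
    using assms by (auto simp: subspace_add intro!: closure_subset[THEN subsetD])
  then have add: "(\<lambda>p. fst p + snd p) ` (closure S \<times> closure S) \<subseteq> closure S"
    using image_closure_subset[OF c closed_closure] by (simp add: closure_Times)
  have sc: "scaleR r ` closure S \<subseteq> closure S" for r
  proof -
    have "continuous_on (closure S) (scaleR r)" by (intro continuous_intros)
    moreover have "scaleR r ` S \<subseteq> closure S" using assms by (auto simp: subspace_scale intro!: closure_subset[THEN subsetD])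
    ultimately show ?thesis using image_closure_subset closed_closure by blast
  qed
  show ?thesis unfolding subspace_def
  proof (intro conjI ballI allI)
    show "0 \<in> closure S" using assms closure_subset subspace_0 by blast
    fix x y assume "x \<in> closure S" "y \<in> closure S"
    then show "x + y \<in> closure S" using add by force
  next
    fix c x assume "x \<in> closure S"
    then show "scaleR c x \<in> closure S" using sc by blast
  qed
qed

lemma closure_iunit:
  fixes S :: "'a::complex_hilbert set"
  assumes "\<And>x. x \<in> S \<Longrightarrow> iunit x \<in> S" "x \<in> closure S"
  shows "iunit x \<in> closure S"
proof -
  have "continuous_on (closure S) iunit"
    using bounded_linear_iunit linear_continuous_on by blast
  moreover have "iunit ` S \<subseteq> closure S" using assms closure_subset by blast
  ultimately show ?thesis using image_closure_subset closed_closure assms(2) by blast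
qed

lemma subspace_range_bl: "bounded_linear R \<Longrightarrow> subspace (range R)"
  by (metis bounded_linear.linear linear_subspace_image subspace_UNIV)

lemma iso_ext:
  fixes R S :: "'h::complex_hilbert \<Rightarrow> 'e::complex_hilbert"
  assumes bR: "bounded_linear R" and bS: "bounded_linear S"
    and iR: "\<And>x. R (iunit x) = iunit (R x)" and iS: "\<And>x. S (iunit x) = iunit (S x)"
    and nRS: "\<And>h. norm (R h) = norm (S h)"
  obtains g where "continuous_on (closure (range R)) g" "\<And>h. g (R h) = S h"
    "\<And>x. x \<in> closure (range R) \<Longrightarrow> g x \<in> closure (range S)"
    "\<And>x y. x \<in> closure (range R) \<Longrightarrow> y \<in> closure (range R) \<Longrightarrow> g (x + y) = g x + g y"
    "\<And>x r. x \<in> closure (range R) \<Longrightarrow> g (scaleR r x) = scaleR r (g x)"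
    "\<And>x. x \<in> closure (range R) \<Longrightarrow> g (iunit x) = iunit (g x)"
    "\<And>x. x \<in> closure (range R) \<Longrightarrow> norm (g x) = norm x"
proof -
  interpret R: bounded_linear R by fact
  interpret S: bounded_linear S by fact
  define A where "A = range R"
  define f where "f a = S (SOME h. R h = a)" for a
  have fR: "f (R h) = S h" for h
  proof -
    have "R (SOME h'. R h' = R h) = R h" by (rule someI) simp
    then have "norm (S ((SOME h'. R h' = R h) - h)) = 0" by (simp add: nRS[symmetric] R.diff)
    then show ?thesis by (simp add: f_def S.diff)
  qed
  have "uniformly_continuous_on A f"
    unfolding uniformly_continuous_on_def A_def
  proof (intro allI impI)
    fix e :: real assume "e > 0"
    show "\<exists>d>0. \<forall>x\<in>range R. \<forall>x'\<in>range R. dist x' x < d \<longrightarrow> dist (f x') (f x) < e"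
      using \<open>e > 0\<close> by (intro exI[of _ e]) (auto simp: fR dist_norm nRS[symmetric] R.diff S.diff[symmetric])
  qed
  then obtain g where g: "uniformly_continuous_on (closure A) g" "\<And>x. x \<in> A \<Longrightarrow> f x = g x"
    by (rule uniformly_continuous_on_extension_on_closure) blast
  have gc: "continuous_on (closure A) g" using g(1) uniformly_continuous_imp_continuous by blast
  have gR: "g (R h) = S h" for h using g(2)[of "R h"] fR by (simp add: A_def)
  have subA: "subspace A" unfolding A_def by (rule subspace_range_bl[OF bR])
  have subcA: "subspace (closure A)" by (rule closure_subspace[OF subA])
  have range: "g x \<in> closure (range S)" if "x \<in> closure A" for x
  proof -
    have "g ` A \<subseteq> closure (range S)" by (auto simp: A_def gR intro!: closure_subset[THEN subsetD])
    then show ?thesis using image_closure_subset[OF gc closed_closure] that by blast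
  qed
  have add: "g (x + y) = g x + g y" if "x \<in> closure A" "y \<in> closure A" for x y
  proof -
    have c: "continuous_on (closure (A \<times> A)) (\<lambda>p. g (fst p + snd p) - g (fst p) - g (snd p))"
      unfolding closure_Times
    proof (intro continuous_intros)
      show "continuous_on (closure A \<times> closure A) (\<lambda>p. g (fst p + snd p))"
        by (rule continuous_on_compose2[OF gc]) (auto intro!: continuous_intros simp: subspace_add[OF subcA])
      show "continuous_on (closure A \<times> closure A) (\<lambda>p. g (fst p))"
        by (rule continuous_on_compose2[OF gc]) (auto intro!: continuous_intros)
      show "continuous_on (closure A \<times> closure A) (\<lambda>p. g (snd p))"
        by (rule continuous_on_compose2[OF gc]) (auto intro!: continuous_intros)
    qed
    have z: "(\<lambda>p. g (fst p + snd p) - g (fst p) - g (snd p)) p = 0" if "p \<in> A \<times> A" for p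
      using that by (auto simp: A_def gR R.add[symmetric] S.add)
    have "(\<lambda>p. g (fst p + snd p) - g (fst p) - g (snd p)) (x, y) = 0"
      by (rule continuous_constant_on_closure[OF c z]) (simp_all add: closure_Times that)
    then show ?thesis by (simp add: algebra_simps)
  qed
  have scale: "g (scaleR r x) = scaleR r (g x)" if "x \<in> closure A" for x r
  proof -
    have c: "continuous_on (closure A) (\<lambda>x. g (scaleR r x) - scaleR r (g x))"
    proof (intro continuous_intros)
      show "continuous_on (closure A) (\<lambda>x. g (scaleR r x))"
        by (rule continuous_on_compose2[OF gc]) (auto intro!: continuous_intros simp: subspace_scale[OF subcA])
    qed (rule gc)
    have "(\<lambda>x. g (scaleR r x) - scaleR r (g x)) x = 0"
      by (rule continuous_constant_on_closure[OF c _ that]) (auto simp: A_def gR R.scaleR[symmetric] S.scaleR)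
    then show ?thesis by simp
  qed
  have iA: "\<And>x. x \<in> A \<Longrightarrow> iunit x \<in> A" by (auto simp: A_def iR[symmetric])
  have iu: "g (iunit x) = iunit (g x)" if "x \<in> closure A" for x
  proof -
    have ci: "continuous_on UNIV (iunit :: 'e \<Rightarrow> 'e)" "continuous_on UNIV (iunit :: 'h \<Rightarrow> 'h)"
      using bounded_linear_iunit linear_continuous_on by blast+
    have c: "continuous_on (closure A) (\<lambda>x. g (iunit x) - iunit (g x))"
    proof (intro continuous_intros)
      show "continuous_on (closure A) (\<lambda>x. g (iunit x))"
        by (rule continuous_on_compose2[OF gc]) (auto intro: closure_iunit[OF iA] continuous_on_subset[OF ci(1)])
      show "continuous_on (closure A) (\<lambda>x. iunit (g x))"
        by (rule continuous_on_compose2[OF ci(1) gc]) auto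
    qed
    have "(\<lambda>x. g (iunit x) - iunit (g x)) x = 0"
      by (rule continuous_constant_on_closure[OF c _ that]) (auto simp: A_def gR iR[symmetric] iS)
    then show ?thesis by simp
  qed
  have nm: "norm (g x) = norm x" if "x \<in> closure A" for x
  proof -
    have c: "continuous_on (closure A) (\<lambda>x. norm (g x) - norm x)"
      by (intro continuous_intros gc)
    have "(\<lambda>x. norm (g x) - norm x) x = 0"
      by (rule continuous_constant_on_closure[OF c _ that]) (auto simp: A_def gR nRS)
    then show ?thesis by simp
  qed
  show ?thesis by (rule that[OF gc[unfolded A_def] gR range[unfolded A_def] add[unfolded A_def]
      scale[unfolded A_def] iu[unfolded A_def] nm[unfolded A_def]])
qed

lemma iso_inner:
  assumes add: "g (x + y) = g x + g y" and nx: "norm (g x) = norm x" and ny: "norm (g y) = norm y"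
    and nxy: "norm (g (x + y)) = norm (x + y)"
  shows "inner (g x) (g y) = inner x (y::'a::real_inner)"
proof -
  have "(norm (g x + g y))\<^sup>2 = (norm (x + y))\<^sup>2" using add nxy by simp
  then have "inner (g x + g y) (g x + g y) = inner (x + y) (x + y)" by (simp add: power2_norm_eq_inner)
  then have "inner (g x) (g x) + 2 * inner (g x) (g y) + inner (g y) (g y) = inner x x + 2 * inner x y + inner y y"
    by (simp add: inner_add_left inner_add_right inner_commute)
  moreover have "inner (g x) (g x) = inner x x" "inner (g y) (g y) = inner y y"
    using nx ny by (simp_all add: power2_norm_eq_inner[symmetric])
  ultimately show ?thesis by simp
qed

lemma csub_closure_range:
  assumes "bounded_linear (R :: 'h::complex_hilbert \<Rightarrow> 'e::complex_hilbert)"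
  shows "csub (closure (range R))"
  by unfold_locales (auto intro: closure_subspace subspace_range_bl assms)

lemma unitary_G:
  fixes R S :: "'h::complex_hilbert \<Rightarrow> 'e::complex_hilbert"
  assumes bR: "bounded_linear R" and bS: "bounded_linear S"
    and iR: "\<And>x. R (iunit x) = iunit (R x)" and iS: "\<And>x. S (iunit x) = iunit (S x)"
    and nRS: "\<And>h. norm (R h) = norm (S h)"
  shows "\<exists>G Ga. bounded_linear G \<and> bounded_linear Ga \<and> (\<forall>x. G (iunit x) = iunit (G x))
     \<and> (\<forall>x. Ga (iunit x) = iunit (Ga x)) \<and> (\<forall>x y. inner (G x) y = inner x (Ga y))
     \<and> (\<forall>x. G (Ga x) = x) \<and> (\<forall>x. Ga (G x) = x) \<and> (\<forall>h. G (R h, 0::'e) = (S h, 0::'e))"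
proof -
  obtain g where g0: "continuous_on (closure (range R)) g" "\<And>h. g (R h) = S h"
    "\<And>x. x \<in> closure (range R) \<Longrightarrow> g x \<in> closure (range S)"
    "\<And>x y. x \<in> closure (range R) \<Longrightarrow> y \<in> closure (range R) \<Longrightarrow> g (x + y) = g x + g y"
    "\<And>x r. x \<in> closure (range R) \<Longrightarrow> g (scaleR r x) = scaleR r (g x)"
    "\<And>x. x \<in> closure (range R) \<Longrightarrow> g (iunit x) = iunit (g x)"
    "\<And>x. x \<in> closure (range R) \<Longrightarrow> norm (g x) = norm x"
    using iso_ext[OF bR bS iR iS nRS] by blast
  obtain k where k0: "continuous_on (closure (range S)) k" "\<And>h. k (S h) = R h"
    "\<And>x. x \<in> closure (range S) \<Longrightarrow> k x \<in> closure (range R)"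
    "\<And>x y. x \<in> closure (range S) \<Longrightarrow> y \<in> closure (range S) \<Longrightarrow> k (x + y) = k x + k y"
    "\<And>x r. x \<in> closure (range S) \<Longrightarrow> k (scaleR r x) = scaleR r (k x)"
    "\<And>x. x \<in> closure (range S) \<Longrightarrow> k (iunit x) = iunit (k x)"
    "\<And>x. x \<in> closure (range S) \<Longrightarrow> norm (k x) = norm x"
    using iso_ext[OF bS bR iS iR nRS[symmetric]] by blast
  define M where "M = closure (range R)"
  define N where "N = closure (range S)"
  note g = g0[folded M_def N_def]
  note k = k0[folded M_def N_def]
  interpret M: csub M unfolding M_def by (rule csub_closure_range[OF bR])
  interpret N: csub N unfolding N_def by (rule csub_closure_range[OF bS])
  have iM: "\<And>x. x \<in> M \<Longrightarrow> iunit x \<in> M"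
    unfolding M_def by (rule closure_iunit) (auto simp: iR[symmetric])
  have iN: "\<And>x. x \<in> N \<Longrightarrow> iunit x \<in> N"
    unfolding N_def by (rule closure_iunit) (auto simp: iS[symmetric])
  have kg: "k (g x) = x" if "x \<in> M" for x
  proof -
    have c: "continuous_on (closure (range R)) (\<lambda>x. k (g x) - x)"
      unfolding M_def[symmetric]
      by (intro continuous_intros continuous_on_compose2[OF k(1) g(1)]) (auto intro: g(3))
    have "(\<lambda>x. k (g x) - x) x = 0"
      by (rule continuous_constant_on_closure[OF c]) (auto simp: g(2) k(2) that[unfolded M_def])
    then show ?thesis by simp
  qed
  have gk: "g (k x) = x" if "x \<in> N" for x
  proof -
    have c: "continuous_on (closure (range S)) (\<lambda>x. g (k x) - x)"
      unfolding N_def[symmetric]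
      by (intro continuous_intros continuous_on_compose2[OF g(1) k(1)]) (auto intro: k(3))
    have "(\<lambda>x. g (k x) - x) x = 0"
      by (rule continuous_constant_on_closure[OF c]) (auto simp: g(2) k(2) that[unfolded N_def])
    then show ?thesis by simp
  qed
  have ginner: "inner (g x) (g y) = inner x y" if "x \<in> M" "y \<in> M" for x y
  proof -
    have xy: "x + y \<in> M" using that M.sub by (simp add: subspace_add)
    show ?thesis by (rule iso_inner[OF g(4)[OF that] g(7)[OF that(1)] g(7)[OF that(2)] g(7)[OF xy]])
  qed
  define U where "U x = g (proj M x)" for x
  define U' where "U' y = k (proj N y)" for y
  have U0: "U 0 = 0" using g(5)[OF M.proj_in, of 0 0] by (simp add: U_def M.proj_scale[of 0, simplified])
  have U'0: "U' 0 = 0" using k(5)[OF N.proj_in, of 0 0] by (simp add: U'_def N.proj_scale[of 0, simplified])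
  have UN: "U x \<in> N" for x unfolding U_def by (rule g(3)[OF M.proj_in])
  have U'M: "U' x \<in> M" for x unfolding U'_def by (rule k(3)[OF N.proj_in])
  have Uadj: "inner (U x) y = inner x (U' y)" for x y
  proof -
    have "inner (U x) y = inner (U x) (proj N y)"
      using N.proj_orth_compl[OF UN[of x], of y] by (simp add: inner_diff_right)
    also have "\<dots> = inner (g (proj M x)) (g (k (proj N y)))" by (simp add: U_def gk N.proj_in)
    also have "\<dots> = inner (proj M x) (k (proj N y))" by (rule ginner[OF M.proj_in k(3)[OF N.proj_in]])
    also have "\<dots> = inner x (U' y)"
      using M.proj_orth[OF U'M, of x] by (simp add: U'_def inner_diff_left)
    finally show ?thesis .
  qed
  have blU: "bounded_linear U"
  proof (rule bounded_linear_intro[where K=1])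
    show "U (x + y) = U x + U y" for x y by (simp add: U_def M.proj_add g(4) M.proj_in)
    show "U (scaleR r x) = scaleR r (U x)" for r x by (simp add: U_def M.proj_scale g(5) M.proj_in)
    show "norm (U x) \<le> norm x * 1" for x by (simp add: U_def g(7) M.proj_in M.proj_norm)
  qed
  have blU': "bounded_linear U'"
  proof (rule bounded_linear_intro[where K=1])
    show "U' (x + y) = U' x + U' y" for x y by (simp add: U'_def N.proj_add k(4) N.proj_in)
    show "U' (scaleR r x) = scaleR r (U' x)" for r x by (simp add: U'_def N.proj_scale k(5) N.proj_in)
    show "norm (U' x) \<le> norm x * 1" for x by (simp add: U'_def k(7) N.proj_in N.proj_norm)
  qed
  interpret U: bounded_linear U by (rule blU)
  interpret U': bounded_linear U' by (rule blU')
  have iU: "U (iunit x) = iunit (U x)" for x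
    by (simp add: U_def csub_iunit[OF M.csub_axioms iM] g(6) M.proj_in)
  have iU': "U' (iunit x) = iunit (U' x)" for x
    by (simp add: U'_def csub_iunit[OF N.csub_axioms iN] k(6) N.proj_in)
  have UPM: "U (proj M x) = U x" for x by (simp add: U_def M.proj_proj)
  have U'PN: "U' (proj N x) = U' x" for x by (simp add: U'_def N.proj_proj)
  have PNU: "proj N (U x) = U x" for x by (rule N.proj_id[OF UN])
  have PMU': "proj M (U' x) = U' x" for x by (rule M.proj_id[OF U'M])
  have U'U: "U' (U x) = proj M x" for x by (simp add: U'_def PNU[unfolded U_def] U_def kg M.proj_in)
  have UU': "U (U' x) = proj N x" for x by (simp add: U_def PMU'[unfolded U'_def] U'_def gk N.proj_in)
  have UPM0: "U (x - proj M x) = 0" for x using UPM[of x] by (simp add: U.diff)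
  have U'PN0: "U' (x - proj N x) = 0" for x using U'PN[of x] by (simp add: U'.diff)
  have PM0: "proj M (x - proj M x) = 0" for x by (simp add: M.proj_proj linear_diff[OF M.proj_linear])
  have PN0: "proj N (x - proj N x) = 0" for x by (simp add: N.proj_proj linear_diff[OF N.proj_linear])
  define G where "G p = (U (fst p) + (snd p - proj N (snd p)), (fst p - proj M (fst p)) - U' (snd p))" for p
  define Ga where "Ga p = (U' (fst p) + (snd p - proj M (snd p)), (fst p - proj N (fst p)) - U (snd p))" for p
  have blPM: "bounded_linear (proj M)" by (rule M.proj_bounded_linear)
  have blPN: "bounded_linear (proj N)" by (rule N.proj_bounded_linear)
  have blG: "bounded_linear G" unfolding G_def[abs_def]
    by (intro bounded_linear_Pair bounded_linear_add bounded_linear_sub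
        bounded_linear_compose[OF blU bounded_linear_fst] bounded_linear_compose[OF blU' bounded_linear_snd]
        bounded_linear_compose[OF blPM bounded_linear_fst] bounded_linear_compose[OF blPN bounded_linear_snd]
        bounded_linear_fst bounded_linear_snd)
  have blGa: "bounded_linear Ga" unfolding Ga_def[abs_def]
    by (intro bounded_linear_Pair bounded_linear_add bounded_linear_sub
        bounded_linear_compose[OF blU bounded_linear_snd] bounded_linear_compose[OF blU' bounded_linear_fst]
        bounded_linear_compose[OF blPM bounded_linear_snd] bounded_linear_compose[OF blPN bounded_linear_fst]
        bounded_linear_fst bounded_linear_snd)
  have iG: "G (iunit x) = iunit (G x)" for x
    by (simp add: G_def iU iU' csub_iunit[OF M.csub_axioms iM] csub_iunit[OF N.csub_axioms iN] iunit_add iunit_diff)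
  have iGa: "Ga (iunit x) = iunit (Ga x)" for x
    by (simp add: Ga_def iU iU' csub_iunit[OF M.csub_axioms iM] csub_iunit[OF N.csub_axioms iN] iunit_add iunit_diff)
  have adj: "inner (G x) y = inner x (Ga y)" for x y
  proof -
    obtain e f where x: "x = (e, f)" by fastforce
    obtain e' f' where y: "y = (e', f')" by fastforce
    have 1: "inner (U e) e' = inner e (U' e')" by (rule Uadj)
    have 2: "inner (U' f) f' = inner f (U f')" using Uadj[of f' f] by (simp add: inner_commute)
    have 3: "inner (proj N f) e' = inner f (proj N e')" by (rule N.proj_selfadj)
    have 4: "inner (proj M e) f' = inner e (proj M f')" by (rule M.proj_selfadj)
    show ?thesis unfolding x y G_def Ga_def
      by (simp add: inner_add_left inner_add_right inner_diff_left inner_diff_right 1 2 3 4)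
  qed
  have PMl: "linear (proj M)" by (rule M.proj_linear)
  have PNl: "linear (proj N)" by (rule N.proj_linear)
  have GGa: "G (Ga x) = x" for x
  proof -
    obtain e f where x: "x = (e, f)" by fastforce
    define a where "a = U' e + (f - proj M f)"
    define b where "b = (e - proj N e) - U f"
    have Gax: "Ga x = (a, b)" by (simp add: Ga_def x a_def b_def)
    have Ua: "U a = proj N e" unfolding a_def by (simp only: U.add UU' UPM0) simp
    have PNb: "proj N b = - U f" unfolding b_def by (simp only: linear_diff[OF PNl] PN0 PNU N.proj_proj) simp
    have PMa: "proj M a = U' e" unfolding a_def by (simp only: linear_add[OF PMl] linear_diff[OF PMl] PMU' M.proj_proj) simp
    have U'b: "U' b = - proj M f" unfolding b_def by (simp only: U'.diff U'PN U'U) simp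
    show ?thesis unfolding Gax by (simp add: G_def Ua PNb PMa U'b x) (simp add: a_def b_def)
  qed
  have GaG: "Ga (G x) = x" for x
  proof -
    obtain e f where x: "x = (e, f)" by fastforce
    define a where "a = U e + (f - proj N f)"
    define b where "b = (e - proj M e) - U' f"
    have Gx: "G x = (a, b)" by (simp add: G_def x a_def b_def)
    have U'a: "U' a = proj M e" unfolding a_def by (simp only: U'.add U'U U'PN0) simp
    have PMb: "proj M b = - U' f" unfolding b_def by (simp only: linear_diff[OF PMl] PM0 PMU' M.proj_proj) simp
    have PNa: "proj N a = U e" unfolding a_def by (simp only: linear_add[OF PNl] linear_diff[OF PNl] PNU N.proj_proj) simp
    have Ub: "U b = - proj N f" unfolding b_def by (simp only: U.diff UPM UU') simp
    show ?thesis unfolding Gx by (simp add: Ga_def U'a PMb PNa Ub x) (simp add: a_def b_def)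
  qed
  have RM: "R h \<in> M" for h unfolding M_def by (rule closure_subset[THEN subsetD]) simp
  have GR: "G (R h, 0) = (S h, 0)" for h
    by (simp add: G_def U_def M.proj_id[OF RM] g(2) N.proj_zero[of 0, simplified])
  have "bounded_linear G \<and> bounded_linear Ga \<and> (\<forall>x. G (iunit x) = iunit (G x))
     \<and> (\<forall>x. Ga (iunit x) = iunit (Ga x)) \<and> (\<forall>x y. inner (G x) y = inner x (Ga y))
     \<and> (\<forall>x. G (Ga x) = x) \<and> (\<forall>x. Ga (G x) = x) \<and> (\<forall>h. G (R h, 0) = (S h, 0))"
    by (simp add: blG blGa iG iGa adj GGa GaG GR)
  then show ?thesis by blast
qed


lemma l2_iff: "x \<in> l2 \<longleftrightarrow> summable (\<lambda>n. (norm (x n))\<^sup>2)" by (simp add: l2_def)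

lemma norm_add_sq_le: "(norm (a + b::'a::real_normed_vector))\<^sup>2 \<le> 2 * (norm a)\<^sup>2 + 2 * (norm b)\<^sup>2"
proof -
  have "(norm (a + b))\<^sup>2 \<le> (norm a + norm b)\<^sup>2"
    by (simp add: norm_triangle_ineq power_mono)
  also have "\<dots> \<le> 2 * (norm a)\<^sup>2 + 2 * (norm b)\<^sup>2"
    using sum_squares_bound[of "norm a" "norm b"] by (simp add: power2_sum)
  finally show ?thesis .
qed

lemma l2_add: "x \<in> l2 \<Longrightarrow> y \<in> l2 \<Longrightarrow> l2add x y \<in> l2"
  unfolding l2_iff l2add_def
proof -
  assume a: "summable (\<lambda>n. (norm (x n))\<^sup>2)" "summable (\<lambda>n. (norm (y n))\<^sup>2)"
  have "summable (\<lambda>n. 2 * (norm (x n))\<^sup>2 + 2 * (norm (y n))\<^sup>2)"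
    using a by (intro summable_add summable_mult)
  then show "summable (\<lambda>n. (norm (x n + y n))\<^sup>2)"
    by (rule summable_comparison_test') (simp add: norm_add_sq_le)
qed

lemma l2_scale: "x \<in> l2 \<Longrightarrow> l2scale c x \<in> l2"
  unfolding l2_iff l2scale_def by (simp add: power_mult_distrib summable_mult)

lemma l2_zero: "(\<lambda>n. 0) \<in> l2" by (simp add: l2_iff)

lemma closed_csubspace_l2: "closed_csubspace (l2 :: (nat \<Rightarrow> 'a::complex_hilbert) set)"
  unfolding closed_csubspace_def by (auto simp: l2_add l2_scale l2_zero)

lemma l2_summable_cinner:
  assumes "x \<in> l2" "y \<in> l2"
  shows "summable (\<lambda>n. cinner (x n) (y n))"
proof (rule summable_comparison_test[OF _ summable_add[OF assms[unfolded l2_iff]]])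
  show "\<exists>N. \<forall>n\<ge>N. norm (cinner (x n) (y n)) \<le> (norm (x n))\<^sup>2 + (norm (y n))\<^sup>2"
  proof (intro exI allI impI)
    fix n
    have "cmod (cinner (x n) (y n)) \<le> norm (x n) * norm (y n)" by (rule cmod_cinner_le)
    also have "\<dots> \<le> (norm (x n))\<^sup>2 + (norm (y n))\<^sup>2"
      using sum_squares_bound[of "norm (x n)" "norm (y n)"] zero_le_power2[of "norm (x n)"]
        zero_le_power2[of "norm (y n)"] mult_nonneg_nonneg[OF norm_ge_zero norm_ge_zero, of "x n" "y n"]
      by linarith
    finally show "norm (cinner (x n) (y n)) \<le> (norm (x n))\<^sup>2 + (norm (y n))\<^sup>2" by simp
  qed
qed

lemma l2norm_def': "l2norm x = sqrt (\<Sum>n. (norm (x n))\<^sup>2)" by (simp add: l2norm_def)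

section \<open>Blocks of four\<close>

lemma sums_blocks4:
  fixes f :: "nat \<Rightarrow> 'a::real_normed_vector"
  assumes "f sums s"
  shows "(\<lambda>k. f (4*k+1) + f (4*k+2) + f (4*k+3) + f (4*k+4)) sums (s - f 0)"
proof -
  have "(\<lambda>n. f (Suc n)) sums (s - f 0)" using assms by (simp add: sums_Suc_iff)
  from sums_group[OF this, of 4]
  have "(\<lambda>n. sum (\<lambda>n. f (Suc n)) {n * 4..<n * 4 + 4}) sums (s - f 0)" by simp
  moreover have "sum (\<lambda>n. f (Suc n)) {n * 4..<n * 4 + 4} = f (4*n+1) + f (4*n+2) + f (4*n+3) + f (4*n+4)" for n
    by (simp add: numeral_eq_Suc add.commute mult.commute sum.atLeastLessThan_Suc add.assoc)
  ultimately show ?thesis by simp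
qed

lemma suminf_blocks4:
  fixes f :: "nat \<Rightarrow> 'a::real_normed_vector"
  assumes "summable f"
  shows "suminf f = f 0 + (\<Sum>k. f (4*k+1) + f (4*k+2) + f (4*k+3) + f (4*k+4))"
  using sums_unique[OF sums_blocks4[OF summable_sums[OF assms]]] by (metis diff_eq_eq add.commute)

lemma summable_blocks4_nonneg:
  fixes f g :: "nat \<Rightarrow> real"
  assumes g0: "\<And>n. g n \<ge> 0" and f: "summable f" and f0: "\<And>n. f n \<ge> 0"
    and e0: "g 0 = f 0"
    and eb: "\<And>k. g (4*k+1) + g (4*k+2) + g (4*k+3) + g (4*k+4) = f (4*k+1) + f (4*k+2) + f (4*k+3) + f (4*k+4)"
  shows "summable g" "suminf g = suminf f"
proof -
  have ps: "(\<Sum>n<4*K+1. g n) = (\<Sum>n<4*K+1. f n)" for K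
  proof (induction K)
    case 0 then show ?case using e0 by simp
  next
    case (Suc K)
    have "(\<Sum>n<4*Suc K+1. g n) = (\<Sum>n<4*K+1. g n) + (g (4*K+1) + g (4*K+2) + g (4*K+3) + g (4*K+4))"
      by (simp add: numeral_eq_Suc algebra_simps)
    moreover have "(\<Sum>n<4*Suc K+1. f n) = (\<Sum>n<4*K+1. f n) + (f (4*K+1) + f (4*K+2) + f (4*K+3) + f (4*K+4))"
      by (simp add: numeral_eq_Suc algebra_simps)
    ultimately show ?case using Suc eb by simp
  qed
  show sg: "summable g"
  proof (rule summableI_nonneg_bounded[where x="suminf f"])
    fix N
    have "(\<Sum>n<N. g n) \<le> (\<Sum>n<4*N+1. g n)" by (rule sum_mono2) (auto simp: g0)
    also have "\<dots> = (\<Sum>n<4*N+1. f n)" by (rule ps)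
    also have "\<dots> \<le> suminf f" by (rule sum_le_suminf[OF f]) (auto simp: f0)
    finally show "(\<Sum>n<N. g n) \<le> suminf f" .
  qed (rule g0)
  show "suminf g = suminf f"
    using suminf_blocks4[OF sg] suminf_blocks4[OF f] e0 eb by simp
qed

definition blk :: "(nat \<Rightarrow> 'a) \<Rightarrow> nat \<Rightarrow> ('a \<times> 'a) \<times> ('a \<times> 'a)" where
  "blk x k = ((x (4*k+1), x (4*k+3)), (x (4*k+2), x (4*k+4)))"

definition pick :: "nat \<Rightarrow> ('a \<times> 'a) \<times> ('a \<times> 'a) \<Rightarrow> 'a" where
  "pick r v = (if r = 0 then fst (fst v) else if r = 1 then fst (snd v) else if r = 2 then snd (fst v) else snd (snd v))"

definition blkop :: "(nat \<Rightarrow> ('a \<times> 'a) \<times> ('a \<times> 'a) \<Rightarrow> ('a \<times> 'a) \<times> ('a \<times> 'a)) \<Rightarrow> (nat \<Rightarrow> 'a) \<Rightarrow> nat \<Rightarrow> 'a" where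
  "blkop B x n = (if n = 0 then x 0 else pick ((n - 1) mod 4) (B ((n - 1) div 4) (blk x ((n - 1) div 4))))"

lemma blkop_0[simp]: "blkop B x 0 = x 0" by (simp add: blkop_def)

lemma blk_blkop[simp]: "blk (blkop B x) k = B k (blk x k)"
proof -
  have a: "(4 * k + j) div 4 = k" "(4 * k + j) mod 4 = j" if "j < 4" for j
    using that by auto
  show ?thesis unfolding blk_def blkop_def
    using a[of 0] a[of 1] a[of 2] a[of 3] by (simp add: pick_def prod_eq_iff)
qed

lemma blkop_eqI:
  assumes "x 0 = y 0" "\<And>k. blk x k = blk y k"
  shows "x = y"
proof
  fix n
  show "x n = y n"
  proof (cases n)
    case 0 then show ?thesis using assms by simp
  next
    case (Suc m)
    define k where "k = m div 4"
    define r where "r = m mod 4"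
    have m: "m = 4 * k + r" "r < 4" by (auto simp: k_def r_def)
    have e: "x (4*k+1) = y (4*k+1)" "x (4*k+2) = y (4*k+2)" "x (4*k+3) = y (4*k+3)" "x (4*k+4) = y (4*k+4)"
      using assms(2)[of k] by (simp_all add: blk_def)
    have "Suc m = 4*k+1 \<or> Suc m = 4*k+2 \<or> Suc m = 4*k+3 \<or> Suc m = 4*k+4" using m by auto
    then show ?thesis unfolding Suc using e by metis
  qed
qed

lemma blkop_blkop:
  assumes "\<And>k v. B k (B' k v) = v"
  shows "blkop B (blkop B' x) = x"
  by (rule blkop_eqI) (simp_all add: assms)

lemma norm_sq_blk: "(norm (blk x k))\<^sup>2 = (norm (x (4*k+1)))\<^sup>2 + (norm (x (4*k+2)))\<^sup>2 + (norm (x (4*k+3)))\<^sup>2 + (norm (x (4*k+4)))\<^sup>2"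
  by (simp add: blk_def norm_Pair)

lemma cinner_blk: "cinner (blk x k) (blk y k) = cinner (x (4*k+1)) (y (4*k+1)) + cinner (x (4*k+2)) (y (4*k+2)) + cinner (x (4*k+3)) (y (4*k+3)) + cinner (x (4*k+4)) (y (4*k+4))"
  by (simp add: blk_def)

lemma blkop_l2:
  fixes x :: "nat \<Rightarrow> 'a::complex_hilbert"
  assumes x: "x \<in> l2" and nB: "\<And>k v. norm (B k v) = norm v"
  shows "blkop B x \<in> l2" "(\<Sum>n. (norm (blkop B x n))\<^sup>2) = (\<Sum>n. (norm (x n))\<^sup>2)"
proof -
  have eb: "(norm (blkop B x (4*k+1)))\<^sup>2 + (norm (blkop B x (4*k+2)))\<^sup>2 + (norm (blkop B x (4*k+3)))\<^sup>2 + (norm (blkop B x (4*k+4)))\<^sup>2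
    = (norm (x (4*k+1)))\<^sup>2 + (norm (x (4*k+2)))\<^sup>2 + (norm (x (4*k+3)))\<^sup>2 + (norm (x (4*k+4)))\<^sup>2" for k
    using norm_sq_blk[of "blkop B x" k] norm_sq_blk[of x k] nB[of k "blk x k"] by simp
  note r = summable_blocks4_nonneg[of "\<lambda>n. (norm (blkop B x n))\<^sup>2" "\<lambda>n. (norm (x n))\<^sup>2", OF _ x[unfolded l2_iff] _ _ eb]
  show "blkop B x \<in> l2" using r by (simp add: l2_iff)
  show "(\<Sum>n. (norm (blkop B x n))\<^sup>2) = (\<Sum>n. (norm (x n))\<^sup>2)" using r by simp
qed

lemma blkop_adj:
  fixes x y :: "nat \<Rightarrow> 'a::complex_hilbert"
  assumes x: "x \<in> l2" and y: "y \<in> l2" and nB: "\<And>k v. norm (B k v) = norm v" and nB': "\<And>k v. norm (B' k v) = norm v"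
    and adj: "\<And>k v w. cinner (B k v) w = cinner v (B' k w)"
  shows "l2cinner (blkop B x) y = l2cinner x (blkop B' y)"
proof -
  have s1: "summable (\<lambda>n. cinner (blkop B x n) (y n))"
    by (rule l2_summable_cinner[OF blkop_l2(1)[OF x nB] y])
  have s2: "summable (\<lambda>n. cinner (x n) (blkop B' y n))"
    by (rule l2_summable_cinner[OF x blkop_l2(1)[OF y nB']])
  show ?thesis unfolding l2cinner_def
    using cinner_blk[of "blkop B x" k y for k] cinner_blk[of x k "blkop B' y" for k] adj
    by (simp add: suminf_blocks4[OF s1] suminf_blocks4[OF s2])
qed

lemma l2norm_le_sqrt:
  assumes "x \<in> l2" "(\<Sum>n. (norm (y n))\<^sup>2) \<le> C * (\<Sum>n. (norm (x n))\<^sup>2)" "C \<ge> 0"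
  shows "l2norm y \<le> sqrt C * l2norm x"
  using assms by (simp add: l2norm_def real_sqrt_mult[symmetric])


section \<open>Shift-type operators\<close>

definition Wb :: "('h::complex_hilbert \<Rightarrow> 'h) \<Rightarrow> ('h \<Rightarrow> 'h) \<Rightarrow> (nat \<Rightarrow> 'h) \<Rightarrow> nat \<Rightarrow> 'h" where
  "Wb A D h n = (if n = 0 then A (h 0) else if n = 1 then D (h 0) else if n = 2 then 0 else h (n - 2))"

definition Wbs :: "('h::complex_hilbert \<Rightarrow> 'h) \<Rightarrow> ('h \<Rightarrow> 'h) \<Rightarrow> (nat \<Rightarrow> 'h) \<Rightarrow> nat \<Rightarrow> 'h" where
  "Wbs T D y n = (if n = 0 then T (y 0) + D (y 1) else y (n + 2))"

locale defect =
  fixes T A D :: "'h::complex_hilbert \<Rightarrow> 'h"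
  assumes bT: "bop T" and bA: "bop A" and bD: "bop D"
    and adj: "\<And>x y. inner (T x) y = inner x (A y)"
    and Ds: "\<And>x y. inner (D x) y = inner x (D y)"
    and DD: "\<And>x. D (D x) = x - T (A x)"
    and cT: "\<And>x. norm (T x) \<le> norm x"
begin

interpretation T: bounded_linear T using bT by (simp add: bop_def)
interpretation A: bounded_linear A using bA by (simp add: bop_def)
interpretation D: bounded_linear D using bD by (simp add: bop_def)

lemma cadj: "cinner (T x) y = cinner x (A y)"
  using is_adj_iff[OF bT bA] adj by (simp add: is_adj_def)

lemma cDs: "cinner (D x) y = cinner x (D y)"
  using is_adj_iff[OF bD bD] Ds by (simp add: is_adj_def)

lemma normA_D: "(norm (A y))\<^sup>2 + (norm (D y))\<^sup>2 = (norm y)\<^sup>2"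
proof -
  have "(norm (D y))\<^sup>2 = inner y (D (D y))" by (simp add: power2_norm_eq_inner Ds)
  also have "\<dots> = (norm y)\<^sup>2 - inner (T (A y)) y" by (simp add: DD inner_diff_right power2_norm_eq_inner inner_commute)
  also have "inner (T (A y)) y = (norm (A y))\<^sup>2" by (simp add: adj power2_norm_eq_inner)
  finally show ?thesis by simp
qed

lemma normD: "norm (D y) \<le> norm y"
  using normA_D[of y] by (metis abs_norm_cancel le_add_same_cancel2 power2_le_imp_le zero_le_power2 norm_ge_zero)

lemma Wb_l2:
  assumes h: "h \<in> l2"
  shows "Wb A D h \<in> l2" "(\<Sum>n. (norm (Wb A D h n))\<^sup>2) = (\<Sum>n. (norm (h n))\<^sup>2)"
proof -
  have hs: "summable (\<lambda>n. (norm (h n))\<^sup>2)" using h by (simp add: l2_iff)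
  have sh: "(\<lambda>n. (norm (Wb A D h (n + 3)))\<^sup>2) = (\<lambda>n. (norm (h (n + 1)))\<^sup>2)"
    by (simp add: Wb_def)
  have s1: "summable (\<lambda>n. (norm (h (n + 1)))\<^sup>2)" using hs by (subst summable_iff_shift)
  have "summable (\<lambda>n. (norm (Wb A D h (n + 3)))\<^sup>2)" unfolding sh by (rule s1)
  then have s: "summable (\<lambda>n. (norm (Wb A D h n))\<^sup>2)" by (rule summable_iff_shift[THEN iffD1])
  then show "Wb A D h \<in> l2" by (simp add: l2_iff)
  have "(\<Sum>n. (norm (Wb A D h n))\<^sup>2) = (\<Sum>n. (norm (h (n + 1)))\<^sup>2) + ((norm (A (h 0)))\<^sup>2 + (norm (D (h 0)))\<^sup>2)"
    using suminf_split_initial_segment[OF s, of 3] sh by (simp add: Wb_def numeral_3_eq_3)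
  also have "\<dots> = (\<Sum>n. (norm (h n))\<^sup>2)"
    using suminf_split_initial_segment[OF hs, of 1] by (simp add: normA_D)
  finally show "(\<Sum>n. (norm (Wb A D h n))\<^sup>2) = (\<Sum>n. (norm (h n))\<^sup>2)" .
qed

lemma Wbs_l2:
  assumes y: "y \<in> l2"
  shows "Wbs T D y \<in> l2" "(\<Sum>n. (norm (Wbs T D y n))\<^sup>2) \<le> 2 * (\<Sum>n. (norm (y n))\<^sup>2)"
proof -
  have ys: "summable (\<lambda>n. (norm (y n))\<^sup>2)" using y by (simp add: l2_iff)
  have sh: "(\<lambda>n. (norm (Wbs T D y (n + 1)))\<^sup>2) = (\<lambda>n. (norm (y (n + 3)))\<^sup>2)"
    by (simp add: Wbs_def numeral_3_eq_3)
  have s3: "summable (\<lambda>n. (norm (y (n + 3)))\<^sup>2)" using ys by (subst summable_iff_shift)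
  have "summable (\<lambda>n. (norm (Wbs T D y (n + 1)))\<^sup>2)" unfolding sh by (rule s3)
  then have s: "summable (\<lambda>n. (norm (Wbs T D y n))\<^sup>2)" by (rule summable_iff_shift[THEN iffD1])
  then show "Wbs T D y \<in> l2" by (simp add: l2_iff)
  have e1: "(\<Sum>n. (norm (Wbs T D y n))\<^sup>2) = (\<Sum>n. (norm (y (n + 3)))\<^sup>2) + (norm (T (y 0) + D (y 1)))\<^sup>2"
    using suminf_split_initial_segment[OF s, of 1] sh by (simp add: Wbs_def)
  have e2: "(\<Sum>n. (norm (y n))\<^sup>2) = (\<Sum>n. (norm (y (n + 3)))\<^sup>2) + ((norm (y 0))\<^sup>2 + (norm (y 1))\<^sup>2 + (norm (y 2))\<^sup>2)"
    using suminf_split_initial_segment[OF ys, of 3] by (simp add: eval_nat_numeral)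
  have b: "(norm (T (y 0) + D (y 1)))\<^sup>2 \<le> 2 * (norm (y 0))\<^sup>2 + 2 * (norm (y 1))\<^sup>2"
  proof -
    have "(norm (T (y 0) + D (y 1)))\<^sup>2 \<le> 2 * (norm (T (y 0)))\<^sup>2 + 2 * (norm (D (y 1)))\<^sup>2"
      by (rule norm_add_sq_le)
    also have "\<dots> \<le> 2 * (norm (y 0))\<^sup>2 + 2 * (norm (y 1))\<^sup>2"
      using cT[of "y 0"] normD[of "y 1"] by (intro add_mono mult_left_mono power_mono) auto
    finally show ?thesis .
  qed
  have "0 \<le> (\<Sum>n. (norm (y (n + 3)))\<^sup>2)" by (rule suminf_nonneg[OF s3]) simp
  then show "(\<Sum>n. (norm (Wbs T D y n))\<^sup>2) \<le> 2 * (\<Sum>n. (norm (y n))\<^sup>2)"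
    using e1 e2 b zero_le_power2[of "norm (y 2)"] by linarith
qed

lemma Wbs_Wb_adj:
  assumes y: "y \<in> l2" and h: "h \<in> l2"
  shows "l2cinner (Wbs T D y) h = l2cinner y (Wb A D h)"
proof -
  have s1: "summable (\<lambda>n. cinner (Wbs T D y n) (h n))" by (rule l2_summable_cinner[OF Wbs_l2(1)[OF y] h])
  have s2: "summable (\<lambda>n. cinner (y n) (Wb A D h n))" by (rule l2_summable_cinner[OF y Wb_l2(1)[OF h]])
  have "l2cinner (Wbs T D y) h = (\<Sum>n. cinner (y (n + 3)) (h (n + 1))) + cinner (T (y 0) + D (y 1)) (h 0)"
    unfolding l2cinner_def using suminf_split_initial_segment[OF s1, of 1] by (simp add: Wbs_def numeral_3_eq_3)
  also have "\<dots> = (\<Sum>n. cinner (y (n + 3)) (h (n + 1))) + (cinner (y 0) (A (h 0)) + cinner (y 1) (D (h 0)))"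
    by (simp add: cinner_add_left cadj cDs)
  also have "\<dots> = l2cinner y (Wb A D h)"
    unfolding l2cinner_def using suminf_split_initial_segment[OF s2, of 3] by (simp add: Wb_def numeral_3_eq_3)
  finally show ?thesis .
qed

lemma Wbs_Wb: "Wbs T D (Wb A D h) = h"
  by (rule ext) (simp add: Wbs_def Wb_def DD)

lemma Wb_add: "Wb A D (l2add x y) = l2add (Wb A D x) (Wb A D y)"
  by (rule ext) (simp add: Wb_def l2add_def A.add D.add)
lemma Wb_scale: "Wb A D (l2scale c x) = l2scale c (Wb A D x)"
  by (rule ext) (simp add: Wb_def l2scale_def bop_cscale[OF bA] bop_cscale[OF bD])
lemma Wbs_add: "Wbs T D (l2add x y) = l2add (Wbs T D x) (Wbs T D y)"
  by (rule ext) (simp add: Wbs_def l2add_def T.add D.add)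
lemma Wbs_scale: "Wbs T D (l2scale c x) = l2scale c (Wbs T D x)"
  by (rule ext) (simp add: Wbs_def l2scale_def bop_cscale[OF bT] bop_cscale[OF bD] cscale_add_right)

lemma bop_on_Wb: "bop_on l2 (Wb A D)"
  unfolding bop_on_def
proof (intro conjI ballI allI)
  show "\<exists>C. \<forall>x\<in>l2. l2norm (Wb A D x) \<le> C * l2norm x"
    by (intro exI[of _ 1]) (simp add: l2norm_def Wb_l2)
qed (simp_all add: Wb_l2 Wb_add Wb_scale)

lemma bop_on_Wbs: "bop_on l2 (Wbs T D)"
  unfolding bop_on_def
proof (intro conjI ballI allI)
  show "\<exists>C. \<forall>x\<in>l2. l2norm (Wbs T D x) \<le> C * l2norm x"
  proof (intro exI[of _ "sqrt 2"] ballI)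
    fix x :: "nat \<Rightarrow> 'h" assume x: "x \<in> l2"
    show "l2norm (Wbs T D x) \<le> sqrt 2 * l2norm x"
      by (rule l2norm_le_sqrt[OF x Wbs_l2(2)[OF x]]) simp
  qed
qed (simp_all add: Wbs_l2 Wbs_add Wbs_scale)

lemma is_adj_on_Wbs: "is_adj_on l2 (Wbs T D) (Wb A D)"
  unfolding is_adj_on_def using bop_on_Wb Wbs_Wb_adj by blast

end

lemma bop_on_comp:
  assumes "bop_on K S" "bop_on K T" "K \<subseteq> l2"
  shows "bop_on K (\<lambda>x. S (T x))"
proof -
  obtain C1 where C1: "\<forall>x\<in>K. l2norm (S x) \<le> C1 * l2norm x" using assms(1) by (auto simp: bop_on_def)
  obtain C2 where C2: "\<forall>x\<in>K. l2norm (T x) \<le> C2 * l2norm x" using assms(2) by (auto simp: bop_on_def)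
  have TK: "\<forall>x\<in>K. T x \<in> K" using assms(2) by (simp add: bop_on_def)
  have nn: "l2norm x \<ge> 0" if "x \<in> K" for x
    using that assms(3) by (auto simp: l2norm_def l2_iff intro!: suminf_nonneg)
  have "l2norm (S (T x)) \<le> (max C1 0 * max C2 0) * l2norm x" if "x \<in> K" for x
  proof -
    have Tx: "T x \<in> K" using TK that by blast
    have "l2norm (S (T x)) \<le> max C1 0 * l2norm (T x)"
      using C1 Tx nn[OF Tx] by (meson max.cobounded1 mult_right_mono order_trans)
    also have "\<dots> \<le> max C1 0 * (max C2 0 * l2norm x)"
    proof (rule mult_left_mono)
      have "l2norm (T x) \<le> C2 * l2norm x" using C2 that by blast
      also have "\<dots> \<le> max C2 0 * l2norm x" by (rule mult_right_mono) (simp_all add: nn[OF that])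
      finally show "l2norm (T x) \<le> max C2 0 * l2norm x" .
    qed simp
    finally show ?thesis by (simp add: mult.assoc)
  qed
  note bd = this
  have SK: "\<forall>x\<in>K. S x \<in> K" and Sadd: "\<forall>x\<in>K. \<forall>y\<in>K. S (l2add x y) = l2add (S x) (S y)"
    and Ssc: "\<forall>c. \<forall>x\<in>K. S (l2scale c x) = l2scale c (S x)" using assms(1) by (simp_all add: bop_on_def)
  have Tadd: "\<forall>x\<in>K. \<forall>y\<in>K. T (l2add x y) = l2add (T x) (T y)"
    and Tsc: "\<forall>c. \<forall>x\<in>K. T (l2scale c x) = l2scale c (T x)" using assms(2) by (simp_all add: bop_on_def)
  show ?thesis unfolding bop_on_def
  proof (intro conjI ballI allI)
    fix x assume "x \<in> K" then show "S (T x) \<in> K" using SK TK by blast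
  next
    fix x y assume "x \<in> K" "y \<in> K"
    then show "S (T (l2add x y)) = l2add (S (T x)) (S (T y))" using Sadd Tadd TK by simp
  next
    fix c x assume "x \<in> K"
    then show "S (T (l2scale c x)) = l2scale c (S (T x))" using Ssc Tsc TK by simp
  next
    show "\<exists>C. \<forall>x\<in>K. l2norm (S (T x)) \<le> C * l2norm x" using bd by blast
  qed
qed

lemma is_adj_on_comp:
  assumes "is_adj_on K S S'" "is_adj_on K T T'" "bop_on K T" "K \<subseteq> l2"
  shows "is_adj_on K (\<lambda>x. S (T x)) (\<lambda>y. T' (S' y))"
proof -
  have "bop_on K T'" "bop_on K S'" using assms(1,2) by (simp_all add: is_adj_on_def)
  then have b: "bop_on K (\<lambda>y. T' (S' y))" using assms(4) by (rule bop_on_comp)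
  show ?thesis unfolding is_adj_on_def
  proof (intro conjI ballI b)
    fix x y assume "x \<in> K" "y \<in> K"
    then show "l2cinner (S (T x)) y = l2cinner x (T' (S' y))"
      using assms by (simp add: is_adj_on_def bop_on_def)
  qed
qed

lemma l2cinner_commute:
  assumes "x \<in> l2" "y \<in> l2"
  shows "l2cinner x y = cnj (l2cinner y x)"
proof -
  have "summable (\<lambda>n. cinner (y n) (x n))" by (rule l2_summable_cinner[OF assms(2,1)])
  then have "(\<lambda>n. cnj (cinner (y n) (x n))) sums cnj (\<Sum>n. cinner (y n) (x n))"
    by (simp add: sums_cnj summable_sums)
  then show ?thesis unfolding l2cinner_def
    by (simp add: sums_unique[symmetric] cinner_commute[of "x n" "y n" for n])
qed

lemma is_adj_on_sym:
  assumes "is_adj_on K S S'" "bop_on K S" "K \<subseteq> l2"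
  shows "is_adj_on K S' S"
  unfolding is_adj_on_def
proof (intro conjI ballI assms(2))
  fix x y assume xy: "x \<in> K" "y \<in> K"
  have S'K: "S' y \<in> K" "S x \<in> K" using assms xy by (auto simp: is_adj_on_def bop_on_def)
  have "l2cinner (S' x) y = cnj (l2cinner y (S' x))" using assms S'K xy
    by (intro l2cinner_commute) (auto simp: is_adj_on_def bop_on_def)
  also have "\<dots> = cnj (l2cinner (S y) x)" using assms xy by (simp add: is_adj_on_def)
  also have "\<dots> = l2cinner x (S y)" using assms S'K xy
    by (subst l2cinner_commute[of x]) (auto simp: is_adj_on_def bop_on_def)
  finally show "l2cinner (S' x) y = l2cinner x (S y)" .
qed


lemma l2add_apply: "l2add f g n = f n + g n" by (simp add: l2add_def)
lemma l2scale_apply: "l2scale c f n = cscale c (f n)" by (simp add: l2scale_def)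
lemma fst_cscale: "fst (cscale c p) = cscale c (fst p)" by (simp add: cscale_def)
lemma snd_cscale: "snd (cscale c p) = cscale c (snd p)" by (simp add: cscale_def)

lemma blk_l2add: "blk (l2add x y) k = blk x k + blk y k"
  by (simp add: blk_def l2add_def)
lemma blk_l2scale: "blk (l2scale c x) k = cscale c (blk x k)"
  by (simp add: blk_def l2scale_def)
lemma pick_add: "pick r (v + w) = pick r v + pick r w"
  by (simp add: pick_def)
lemma pick_cscale: "pick r (cscale c v) = cscale c (pick r v)"
  by (simp add: pick_def cscale_def)
lemma pick_zero: "pick r 0 = 0"
  by (simp add: pick_def)

lemma blkop_add:
  assumes "\<And>k v w. B k (v + w) = B k v + B k w"
  shows "blkop B (l2add x y) = l2add (blkop B x) (blkop B y)"
  by (rule ext) (simp add: blkop_def l2add_apply blk_l2add assms pick_add)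

lemma blkop_scale:
  assumes "\<And>k v. B k (cscale c v) = cscale c (B k v)"
  shows "blkop B (l2scale c x) = l2scale c (blkop B x)"
  by (rule ext) (simp add: blkop_def l2scale_apply blk_l2scale assms pick_cscale)

lemma emb_l2: "emb h \<in> l2"
proof -
  have "(\<lambda>n. (norm (emb h n))\<^sup>2) = (\<lambda>n. if n = 0 then (norm h)\<^sup>2 else 0)"
    by (auto simp: emb_def)
  then show ?thesis unfolding l2_iff by (simp add: summable_single[of 0 "\<lambda>_. (norm h)\<^sup>2", simplified])
qed

lemma blk_emb: "blk (emb h) k = 0"
  by (simp add: blk_def emb_def zero_prod_def)

lemma l2cinner_emb: "l2cinner (emb h) x = cinner h (x 0)"
proof -
  have "(\<lambda>n. cinner (emb h n) (x n)) = (\<lambda>n. if n = 0 then cinner h (x 0) else 0)"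
    by (auto simp: emb_def)
  moreover have "(\<lambda>n. if n = 0 then cinner h (x 0) else 0) sums cinner h (x 0)"
    using sums_single[of 0 "\<lambda>_. cinner h (x 0)"] by simp
  ultimately show ?thesis unfolding l2cinner_def by (simp add: sums_iff)
qed

definition Gk :: "complex \<Rightarrow> ('a \<Rightarrow> 'a::complex_hilbert) \<Rightarrow> nat \<Rightarrow> 'a \<Rightarrow> 'a" where
  "Gk c G k v = cscale (c ^ Suc k) (G v)"

definition Qbop :: "('h \<Rightarrow> 'h) \<Rightarrow> complex \<Rightarrow> (nat \<Rightarrow> 'h::complex_hilbert) \<Rightarrow> nat \<Rightarrow> 'h" where
  "Qbop Q c x n = (if n = 0 then Q (x 0) else cscale c (x n))"

lemma cnj_mult_self: "cmod q = 1 \<Longrightarrow> cnj q * q = 1"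
  by (metis complex_norm_square mult.commute of_real_1 power_one)

locale dil =
  fixes T1 T2 A1 A2 D1 D2 Q Qa :: "'h::complex_hilbert \<Rightarrow> 'h"
    and G Ga :: "('h \<times> 'h) \<times> ('h \<times> 'h) \<Rightarrow> ('h \<times> 'h) \<times> ('h \<times> 'h)"
    and q :: complex
  assumes d1: "defect T1 A1 D1" and d2: "defect T2 A2 D2"
    and bQ: "bop Q" and bQa: "bop Qa" and Qadj: "\<And>x y. inner (Q x) y = inner x (Qa y)"
    and QQa: "\<And>x. Q (Qa x) = x" and QaQ: "\<And>x. Qa (Q x) = x"
    and comm: "\<And>x. T2 (T1 x) = T1 (T2 (Q x))"
    and q1: "cmod q = 1"
    and bG: "bop G" and bGa: "bop Ga" and Gadj: "\<And>x y. inner (G x) y = inner x (Ga y)"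
    and GGa: "\<And>x. G (Ga x) = x" and GaG: "\<And>x. Ga (G x) = x"
    and GR: "\<And>h. G ((D1 (A2 h), D2 h), 0) = ((D2 (A1 h), D1 h), 0)"
begin

interpretation d1: defect T1 A1 D1 by (rule d1)
interpretation d2: defect T2 A2 D2 by (rule d2)
interpretation T1: bounded_linear T1 using d1.bT by (simp add: bop_def)
interpretation T2: bounded_linear T2 using d2.bT by (simp add: bop_def)
interpretation D1: bounded_linear D1 using d1.bD by (simp add: bop_def)
interpretation D2: bounded_linear D2 using d2.bD by (simp add: bop_def)
interpretation Q: bounded_linear Q using bQ by (simp add: bop_def)
interpretation G: bounded_linear G using bG by (simp add: bop_def)
interpretation Ga: bounded_linear Ga using bGa by (simp add: bop_def)

lemma key: "T2 (D1 (fst (fst (Ga v)))) + D2 (snd (fst (Ga v))) = T1 (D2 (fst (fst v))) + D1 (snd (fst v))"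
proof (rule inner_ext)
  fix h
  obtain a b c d where v: "Ga v = ((a, b), c)" by (metis prod.collapse)
  obtain a' b' c' where v': "v = ((a', b'), c')" by (metis prod.collapse)
  have "inner (T2 (D1 a) + D2 b) h = inner (Ga v) ((D1 (A2 h), D2 h), 0)"
    by (simp add: v inner_add_left d2.adj d1.Ds d2.Ds)
  also have "\<dots> = inner v (G ((D1 (A2 h), D2 h), 0))" by (metis Gadj inner_commute)
  also have "\<dots> = inner (T1 (D2 a') + D1 b') h"
    by (simp add: GR v' inner_add_left d1.adj d1.Ds d2.Ds)
  finally show "inner (T2 (D1 (fst (fst (Ga v)))) + D2 (snd (fst (Ga v)))) h = inner (T1 (D2 (fst (fst v))) + D1 (snd (fst v))) h"
    by (simp add: v[unfolded v'] v')
qed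

definition "Gh = blkop (Gk (cnj q) G)"
definition "Ghs = blkop (Gk q Ga)"
definition "Qb = Qbop Q q"
definition "Qbs = Qbop Qa (cnj q)"
definition "W1 = (\<lambda>x. Wbs T1 D1 (Ghs x))"
definition "W1a = (\<lambda>y. Gh (Wb A1 D1 y))"
definition "W2 = (\<lambda>x. Gh (Wbs T2 D2 x))"
definition "W2a = (\<lambda>y. Wb A2 D2 (Ghs y))"

lemma normG: "norm (G v) = norm v"
proof -
  have "inner (G v) (G v) = inner v v" by (simp add: Gadj GaG)
  then show ?thesis by (simp add: norm_eq_sqrt_inner)
qed

lemma normGa: "norm (Ga v) = norm v"
proof -
  have "inner (Ga v) (Ga v) = inner v v" by (simp add: Gadj[symmetric] GGa inner_commute)
  then show ?thesis by (simp add: norm_eq_sqrt_inner)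
qed

lemma cmodq_pow: "cmod (c ^ n) = 1" if "cmod c = 1" for c
  using that by (simp add: norm_power)

lemma nGk1: "norm (Gk (cnj q) G k v) = norm v"
  by (simp add: Gk_def norm_mult norm_power q1 normG)
lemma nGk2: "norm (Gk q Ga k v) = norm v"
  by (simp add: Gk_def norm_mult norm_power q1 normGa)

lemma cGadj: "cinner (G v) w = cinner v (Ga w)"
proof -
  have "is_adj G Ga" using is_adj_iff[OF bG bGa] Gadj by blast
  then show ?thesis unfolding is_adj_def by blast
qed
lemma cGaadj: "cinner (Ga v) w = cinner v (G w)"
proof -
  have "\<forall>x y. inner (Ga x) y = inner x (G y)" by (metis Gadj inner_commute)
  then have "is_adj Ga G" using is_adj_iff[OF bGa bG] by blast
  then show ?thesis unfolding is_adj_def by blast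
qed

lemma Gk_adj1: "cinner (Gk (cnj q) G k v) w = cinner v (Gk q Ga k w)"
  by (simp add: Gk_def cinner_cscale_left cinner_cscale_right cGadj)
lemma Gk_adj2: "cinner (Gk q Ga k v) w = cinner v (Gk (cnj q) G k w)"
  by (simp add: Gk_def cinner_cscale_left cinner_cscale_right cGaadj)

lemma qq: "cnj q * q = 1" by (rule cnj_mult_self[OF q1])

lemma Gk_inv1: "Gk (cnj q) G k (Gk q Ga k v) = v"
proof -
  have "(cnj q) ^ Suc k * q ^ Suc k = 1" using qq by (metis power_mult_distrib power_one)
  then show ?thesis by (simp add: Gk_def bop_cscale[OF bG] GGa cscale_mult)
qed
lemma Gk_inv2: "Gk q Ga k (Gk (cnj q) G k v) = v"
proof -
  have "q ^ Suc k * (cnj q) ^ Suc k = 1" using qq by (metis mult.commute power_mult_distrib power_one)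
  then show ?thesis by (simp add: Gk_def bop_cscale[OF bGa] GaG cscale_mult)
qed

lemma Gk1_add: "Gk (cnj q) G k (v + w) = Gk (cnj q) G k v + Gk (cnj q) G k w"
  by (simp add: Gk_def G.add cscale_add_right)
lemma Gk2_add: "Gk q Ga k (v + w) = Gk q Ga k v + Gk q Ga k w"
  by (simp add: Gk_def Ga.add cscale_add_right)
lemma Gk1_sc: "Gk (cnj q) G k (cscale c v) = cscale c (Gk (cnj q) G k v)"
  by (simp add: Gk_def bop_cscale[OF bG] cscale_mult mult.commute)
lemma Gk2_sc: "Gk q Ga k (cscale c v) = cscale c (Gk q Ga k v)"
  by (simp add: Gk_def bop_cscale[OF bGa] cscale_mult mult.commute)

lemma bop_on_Gh: "bop_on l2 Gh"
  unfolding bop_on_def Gh_def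
proof (intro conjI ballI allI)
  show "\<exists>C. \<forall>x\<in>l2. l2norm (blkop (Gk (cnj q) G) x) \<le> C * l2norm x"
    by (intro exI[of _ 1]) (simp add: l2norm_def blkop_l2 nGk1)
qed (simp_all add: blkop_l2 nGk1 blkop_add Gk1_add blkop_scale Gk1_sc)

lemma bop_on_Ghs: "bop_on l2 Ghs"
  unfolding bop_on_def Ghs_def
proof (intro conjI ballI allI)
  show "\<exists>C. \<forall>x\<in>l2. l2norm (blkop (Gk q Ga) x) \<le> C * l2norm x"
    by (intro exI[of _ 1]) (simp add: l2norm_def blkop_l2 nGk2)
qed (simp_all add: blkop_l2 nGk2 blkop_add Gk2_add blkop_scale Gk2_sc)

lemma adj_Gh: "is_adj_on l2 Gh Ghs"
  unfolding is_adj_on_def using bop_on_Ghs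
  by (simp add: Gh_def Ghs_def blkop_adj nGk1 nGk2 Gk_adj1)

lemma adj_Ghs: "is_adj_on l2 Ghs Gh"
  unfolding is_adj_on_def using bop_on_Gh
  by (simp add: Gh_def Ghs_def blkop_adj nGk1 nGk2 Gk_adj2)

lemma Gh_Ghs: "Gh (Ghs x) = x" unfolding Gh_def Ghs_def by (rule blkop_blkop) (rule Gk_inv1)
lemma Ghs_Gh: "Ghs (Gh x) = x" unfolding Gh_def Ghs_def by (rule blkop_blkop) (rule Gk_inv2)

lemma Gh_emb: "Gh (emb h) = emb h"
  unfolding Gh_def by (rule blkop_eqI) (simp_all add: blk_emb Gk_def G.zero)
lemma Ghs_emb: "Ghs (emb h) = emb h"
  unfolding Ghs_def by (rule blkop_eqI) (simp_all add: blk_emb Gk_def Ga.zero)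

lemma Wbs_emb1: "Wbs T1 D1 (emb h) = emb (T1 h)"
  by (rule ext) (simp add: Wbs_def emb_def)
lemma Wbs_emb2: "Wbs T2 D2 (emb h) = emb (T2 h)"
  by (rule ext) (simp add: Wbs_def emb_def)

lemma W1_emb: "W1 (emb h) = emb (T1 h)" by (simp add: W1_def Ghs_emb Wbs_emb1)
lemma W2_emb: "W2 (emb h) = emb (T2 h)" by (simp add: W2_def Wbs_emb2 Gh_emb)

lemma normQ: "norm (Q a) = norm a"
proof -
  have "inner (Q a) (Q a) = inner a a" by (simp add: Qadj QaQ)
  then show ?thesis by (simp add: norm_eq_sqrt_inner)
qed

lemma norm_Qb: "norm (Qb x n) = norm (x n)"
  by (simp add: Qb_def Qbop_def normQ q1)

lemma normQa: "norm (Qa a) = norm a"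
proof -
  have "inner (Qa a) (Qa a) = inner a a" by (simp add: Qadj[symmetric] QQa inner_commute)
  then show ?thesis by (simp add: norm_eq_sqrt_inner)
qed

lemma norm_Qbs: "norm (Qbs x n) = norm (x n)"
  by (simp add: Qbs_def Qbop_def normQa q1)

lemma bop_on_Qbop:
  assumes bP: "bop P" and nP: "\<And>a. norm (P a) = norm a" and c: "cmod c = 1"
  shows "bop_on l2 (Qbop P c)"
proof -
  interpret P: bounded_linear P using bP by (simp add: bop_def)
  have n: "norm (Qbop P c x n) = norm (x n)" for x n by (simp add: Qbop_def nP c)
  show ?thesis unfolding bop_on_def
  proof (intro conjI ballI allI)
    show "Qbop P c x \<in> l2" if "x \<in> l2" for x using that by (simp add: l2_iff n)
    show "Qbop P c (l2add x y) = l2add (Qbop P c x) (Qbop P c y)" for x y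
      by (rule ext) (simp add: Qbop_def l2add_def P.add cscale_add_right)
    show "Qbop P c (l2scale d x) = l2scale d (Qbop P c x)" for d x
      by (rule ext) (simp add: Qbop_def l2scale_def bop_cscale[OF bP] cscale_mult mult.commute)
    show "\<exists>C. \<forall>x\<in>l2. l2norm (Qbop P c x) \<le> C * l2norm x"
      by (intro exI[of _ 1]) (simp add: l2norm_def n)
  qed
qed

lemma bop_on_Qb: "bop_on l2 Qb" unfolding Qb_def by (rule bop_on_Qbop[OF bQ normQ q1])
lemma bop_on_Qbs: "bop_on l2 Qbs" unfolding Qbs_def by (rule bop_on_Qbop[OF bQa normQa]) (simp add: q1)

lemma cQadj: "cinner (Q a) b = cinner a (Qa b)"
  using is_adj_iff[OF bQ bQa] Qadj by (simp add: is_adj_def)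

lemma adj_Qb: "is_adj_on l2 Qb Qbs"
  unfolding is_adj_on_def
proof (intro conjI ballI bop_on_Qbs)
  fix x y :: "nat \<Rightarrow> 'h"
  have "cinner (Qb x n) (y n) = cinner (x n) (Qbs y n)" for n
    by (simp add: Qb_def Qbs_def Qbop_def cQadj cinner_cscale_left cinner_cscale_right)
  then show "l2cinner (Qb x) y = l2cinner x (Qbs y)" by (simp add: l2cinner_def)
qed

lemma Qb_Qbs: "Qb (Qbs y) = y"
  by (rule ext) (simp add: Qb_def Qbs_def Qbop_def QQa cscale_mult qq[unfolded mult.commute[of "cnj q"]])
lemma Qbs_Qb: "Qbs (Qb y) = y"
  by (rule ext) (simp add: Qb_def Qbs_def Qbop_def QaQ cscale_mult qq)

lemma unitary_Qb: "unitary_on l2 Qb"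
  unfolding unitary_on_def using bop_on_Qb adj_Qb Qb_Qbs Qbs_Qb by blast

lemma Qb_emb: "Qb (emb h) = emb (Q h)"
  by (rule ext) (simp add: Qb_def Qbop_def emb_def)

lemma reduces_Qb: "reduces_on l2 (range emb) Qb"
  unfolding reduces_on_def
proof (intro conjI ballI)
  fix x :: "nat \<Rightarrow> 'h" assume "x \<in> range emb" then show "Qb x \<in> range emb" by (auto simp: Qb_emb)
next
  fix x :: "nat \<Rightarrow> 'h" assume x: "x \<in> orth_in l2 (range emb)"
  then have xl: "x \<in> l2" and o: "\<And>h. l2cinner (emb h) x = 0" by (auto simp: orth_in_def)
  have "cinner (x 0) (x 0) = 0" using o[of "x 0"] by (simp add: l2cinner_emb)
  then have x0: "x 0 = 0" by (simp add: cinner_eq_zero_iff)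
  have "Qb x \<in> l2" using bop_on_Qb xl by (simp add: bop_on_def)
  moreover have "l2cinner (emb h) (Qb x) = 0" for h
    by (simp add: l2cinner_emb Qb_def Qbop_def x0 Q.zero)
  ultimately show "Qb x \<in> orth_in l2 (range emb)" by (auto simp: orth_in_def)
qed

lemma l2sub: "(l2 :: (nat \<Rightarrow> 'h) set) \<subseteq> l2" by simp

lemma coiso_W1: "coisometry_on l2 W1"
proof -
  have b: "bop_on l2 W1" unfolding W1_def by (rule bop_on_comp[OF d1.bop_on_Wbs bop_on_Ghs l2sub])
  have a: "is_adj_on l2 W1 W1a"
    unfolding W1_def W1a_def by (rule is_adj_on_comp[OF d1.is_adj_on_Wbs adj_Ghs bop_on_Ghs l2sub])
  have "W1 (W1a y) = y" for y by (simp add: W1_def W1a_def Ghs_Gh d1.Wbs_Wb)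
  then show ?thesis unfolding coisometry_on_def using a b by blast
qed

lemma coiso_W2: "coisometry_on l2 W2"
proof -
  have b: "bop_on l2 W2" unfolding W2_def by (rule bop_on_comp[OF bop_on_Gh d2.bop_on_Wbs l2sub])
  have a: "is_adj_on l2 W2 W2a"
    unfolding W2_def W2a_def by (rule is_adj_on_comp[OF adj_Gh d2.is_adj_on_Wbs d2.bop_on_Wbs l2sub])
  have "W2 (W2a y) = y" for y by (simp add: W2_def W2a_def Gh_Ghs d2.Wbs_Wb)
  then show ?thesis unfolding coisometry_on_def using a b by blast
qed

section \<open>The twisted commutation relation\<close>

lemma blk_WW: "blk (Wbs T2 D2 (Wbs T1 D1 z)) k = blk z (Suc k)"
  by (simp add: blk_def Wbs_def) (intro conjI arg_cong[where f=z]; simp)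

lemma blk_WWQ: "blk (Wbs T1 D1 (Wbs T2 D2 (Qb x))) k = cscale q (blk x (Suc k))"
  by (simp add: blk_def Wbs_def Qb_def Qbop_def) (intro conjI arg_cong[where f="\<lambda>n. cscale q (x n)"]; simp)

lemma rel0: "Wbs T2 D2 (Wbs T1 D1 (Ghs x)) = Ghs (Wbs T1 D1 (Wbs T2 D2 (Qb x)))"
proof (rule blkop_eqI)
  define z where "z = Ghs x"
  have z0: "z 0 = x 0" by (simp add: z_def Ghs_def)
  have zb: "blk z 0 = cscale q (Ga (blk x 0))" by (simp add: z_def Ghs_def Gk_def)
  then have z1: "z 1 = cscale q (fst (fst (Ga (blk x 0))))" and z3: "z 3 = cscale q (snd (fst (Ga (blk x 0))))"
    by (simp_all add: blk_def prod_eq_iff fst_cscale snd_cscale)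
  have k: "T2 (D1 (fst (fst (Ga (blk x 0))))) + D2 (snd (fst (Ga (blk x 0)))) = T1 (D2 (x 1)) + D1 (x 3)"
    using key[of "blk x 0"] by (simp add: blk_def)
  have "Wbs T2 D2 (Wbs T1 D1 z) 0 = T2 (T1 (x 0)) + (T2 (D1 (z 1)) + D2 (z 3))"
    by (simp add: Wbs_def z0 T2.add add.assoc numeral_3_eq_3)
  also have "T2 (D1 (z 1)) + D2 (z 3) = cscale q (T1 (D2 (x 1)) + D1 (x 3))"
    unfolding z1 z3 bop_cscale[OF d1.bD] bop_cscale[OF d2.bD] bop_cscale[OF d2.bT] cscale_add_right[symmetric] k
    by (rule refl)
  also have "T2 (T1 (x 0)) + cscale q (T1 (D2 (x 1)) + D1 (x 3)) = Wbs T1 D1 (Wbs T2 D2 (Qb x)) 0"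
    by (simp add: Wbs_def Qb_def Qbop_def comm T1.add bop_cscale[OF d1.bT] bop_cscale[OF d1.bD]
        bop_cscale[OF d2.bD] cscale_add_right add.assoc numeral_3_eq_3)
  finally show "Wbs T2 D2 (Wbs T1 D1 (Ghs x)) 0 = Ghs (Wbs T1 D1 (Wbs T2 D2 (Qb x))) 0"
    by (simp add: z_def Ghs_def)
next
  fix k
  have "blk (Wbs T2 D2 (Wbs T1 D1 (Ghs x))) k = Gk q Ga (Suc k) (blk x (Suc k))"
    by (simp add: blk_WW Ghs_def)
  also have "\<dots> = Gk q Ga k (cscale q (blk x (Suc k)))"
    by (simp add: Gk_def bop_cscale[OF bGa] cscale_mult mult.commute)
  also have "\<dots> = blk (Ghs (Wbs T1 D1 (Wbs T2 D2 (Qb x)))) k"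
    by (simp add: Ghs_def blk_WWQ)
  finally show "blk (Wbs T2 D2 (Wbs T1 D1 (Ghs x))) k = blk (Ghs (Wbs T1 D1 (Wbs T2 D2 (Qb x)))) k" .
qed

lemma rel: "W2 (W1 x) = W1 (W2 (Qb x))"
  by (simp add: W1_def W2_def rel0 Gh_Ghs Ghs_Gh)

lemma pow_emb1: "(W1 ^^ n) (emb h) = emb ((T1 ^^ n) h)"
  by (induction n) (simp_all add: W1_emb)
lemma pow_emb2: "(W2 ^^ n) (emb h) = emb ((T2 ^^ n) h)"
  by (induction n) (simp_all add: W2_emb)

lemma PH_emb: "PH (emb h) = emb h" by (simp add: PH_def emb_def)

lemma conclusion:
  "\<exists>K W1 W2 Qb.
       closed_csubspace K \<and> range emb \<subseteq> K
     \<and> coisometry_on K W1 \<and> coisometry_on K W2 \<and> unitary_on K Qb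
     \<and> reduces_on K (range emb) Qb
     \<and> (\<forall>h. Qb (emb h) = emb (Q h))
     \<and> (\<forall>x\<in>K. Qb x = (\<lambda>n. if n = 0 then Q (x 0) else cscale q (x n)))
     \<and> (\<forall>x\<in>K. W2 (W1 x) = W1 (W2 (Qb x)))
     \<and> (\<forall>h. W1 (emb h) = emb (T1 h)) \<and> (\<forall>h. W2 (emb h) = emb (T2 h))
     \<and> (\<forall>n m h. emb ((T1 ^^ n) ((T2 ^^ m) h)) = PH ((W1 ^^ n) ((W2 ^^ m) (emb h))))
     \<and> (\<forall>n m h. emb ((T2 ^^ n) ((T1 ^^ m) h)) = PH ((W2 ^^ n) ((W1 ^^ m) (emb h))))"
proof (intro exI conjI)
  show "closed_csubspace (l2 :: (nat \<Rightarrow> 'h) set)" by (rule closed_csubspace_l2)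
  show "range emb \<subseteq> l2" using emb_l2 by blast
  show "coisometry_on l2 W1" by (rule coiso_W1)
  show "coisometry_on l2 W2" by (rule coiso_W2)
  show "unitary_on l2 Qb" by (rule unitary_Qb)
  show "reduces_on l2 (range emb) Qb" by (rule reduces_Qb)
  show "\<forall>h. Qb (emb h) = emb (Q h)" by (simp add: Qb_emb)
  show "\<forall>x\<in>l2. Qb x = (\<lambda>n. if n = 0 then Q (x 0) else cscale q (x n))"
    by (simp add: Qb_def Qbop_def[abs_def])
  show "\<forall>x\<in>l2. W2 (W1 x) = W1 (W2 (Qb x))" by (simp add: rel)
  show "\<forall>h. W1 (emb h) = emb (T1 h)" by (simp add: W1_emb)
  show "\<forall>h. W2 (emb h) = emb (T2 h)" by (simp add: W2_emb)
  show "\<forall>n m h. emb ((T1 ^^ n) ((T2 ^^ m) h)) = PH ((W1 ^^ n) ((W2 ^^ m) (emb h)))"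
    by (simp add: pow_emb1 pow_emb2 PH_emb)
  show "\<forall>n m h. emb ((T2 ^^ n) ((T1 ^^ m) h)) = PH ((W2 ^^ n) ((W1 ^^ m) (emb h)))"
    by (simp add: pow_emb1 pow_emb2 PH_emb)
qed

end


lemma adj_contr:
  fixes T A :: "'h::complex_hilbert \<Rightarrow> 'h"
  assumes adj: "\<And>x y. inner (T x) y = inner x (A y)" and c: "\<And>x. norm (T x) \<le> norm x"
  shows "norm (A x) \<le> norm x"
proof (cases "A x = 0")
  case True then show ?thesis by simp
next
  case False
  have "(norm (A x))\<^sup>2 = inner (T (A x)) x" by (simp add: adj power2_norm_eq_inner)
  also have "\<dots> \<le> norm (T (A x)) * norm x" by (rule norm_cauchy_schwarz)
  also have "\<dots> \<le> norm (A x) * norm x" using c by (simp add: mult_right_mono)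
  finally have "norm (A x) * norm (A x) \<le> norm (A x) * norm x" by (simp add: power2_eq_square)
  then show ?thesis using False by simp
qed

lemma defect_exists:
  fixes T :: "'h::complex_hilbert \<Rightarrow> 'h"
  assumes "contraction T"
  shows "\<exists>A D. defect T A D"
proof -
  have bT: "bop T" and cT: "\<And>x. norm (T x) \<le> norm x" using assms by (auto simp: contraction_def)
  obtain A where bA: "bop A" and adj: "\<forall>x y. inner (T x) y = inner x (A y)"
    using bop_adjoint_exists[OF bT] by blast
  have bX: "bop (\<lambda>x. T (A x))" by (rule bop_comp[OF bT bA])
  have sX: "inner (T (A x)) y = inner x (T (A y))" for x y
    by (metis adj inner_commute)
  have cX: "norm (T (A x)) \<le> norm x" for x
    using cT[of "A x"] adj_contr[of T A x] adj cT by (meson order_trans)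
  obtain D where "bop D" "\<forall>x y. inner (D x) y = inner x (D y)" "\<forall>x. D (D x) = x - T (A x)"
    using sqrt_exists[OF bX sX cX] by blast
  then have "defect T A D" using bT bA adj cT by unfold_locales auto
  then show ?thesis by blast
qed

theorem mainTheorem10:
  fixes T1 T2 Q :: "'h::complex_hilbert \<Rightarrow> 'h"
  assumes "contraction T1" and "contraction T2" and "unitary_op Q"
    and "\<forall>x. T2 (T1 x) = T1 (T2 (Q x))"
  shows "\<forall>q. cmod q = 1 \<longrightarrow>
    (\<exists>K W1 W2 Qb.
       closed_csubspace K \<and> range emb \<subseteq> K
     \<and> coisometry_on K W1 \<and> coisometry_on K W2 \<and> unitary_on K Qb
     \<and> reduces_on K (range emb) Qb
     \<and> (\<forall>h. Qb (emb h) = emb (Q h))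
     \<and> (\<forall>x\<in>K. Qb x = (\<lambda>n. if n = 0 then Q (x 0) else cscale q (x n)))
     \<and> (\<forall>x\<in>K. W2 (W1 x) = W1 (W2 (Qb x)))
     \<and> (\<forall>h. W1 (emb h) = emb (T1 h)) \<and> (\<forall>h. W2 (emb h) = emb (T2 h))
     \<and> (\<forall>n m h. emb ((T1 ^^ n) ((T2 ^^ m) h)) = PH ((W1 ^^ n) ((W2 ^^ m) (emb h))))
     \<and> (\<forall>n m h. emb ((T2 ^^ n) ((T1 ^^ m) h)) = PH ((W2 ^^ n) ((W1 ^^ m) (emb h)))))"
proof (intro allI impI)
  fix q :: complex assume q1: "cmod q = 1"
  obtain A1 D1 where d1: "defect T1 A1 D1" using defect_exists[OF assms(1)] by blast
  obtain A2 D2 where d2: "defect T2 A2 D2" using defect_exists[OF assms(2)] by blast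
  interpret d1: defect T1 A1 D1 by (rule d1)
  interpret d2: defect T2 A2 D2 by (rule d2)
  obtain Qa where bQ: "bop Q" and bQa: "bop Qa" and aQ: "is_adj Q Qa"
    and QaQ: "\<And>x. Qa (Q x) = x" and QQa: "\<And>x. Q (Qa x) = x"
    using assms(3) by (auto simp: unitary_op_def)
  have Qadj: "\<And>x y. inner (Q x) y = inner x (Qa y)" using is_adj_iff[OF bQ bQa] aQ by blast
  have comm: "\<And>x. T2 (T1 x) = T1 (T2 (Q x))" using assms(4) by blast
  have normQa: "norm (Qa y) = norm y" for y
  proof -
    have "inner (Qa y) (Qa y) = inner y y" by (metis Qadj QQa inner_commute)
    then show ?thesis by (simp add: norm_eq_sqrt_inner)
  qed
  have AA: "A1 (A2 h) = Qa (A2 (A1 h))" for h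
  proof (rule inner_ext')
    fix x
    have "inner x (A1 (A2 h)) = inner (T2 (T1 x)) h" by (simp add: d1.adj[symmetric] d2.adj[symmetric])
    also have "\<dots> = inner (T1 (T2 (Q x))) h" by (simp add: comm)
    also have "\<dots> = inner x (Qa (A2 (A1 h)))" by (simp add: d1.adj d2.adj Qadj)
    finally show "inner x (A1 (A2 h)) = inner x (Qa (A2 (A1 h)))" .
  qed
  define R where "R h = (D1 (A2 h), D2 h)" for h
  define S where "S h = (D2 (A1 h), D1 h)" for h
  have blD1: "bounded_linear D1" and blD2: "bounded_linear D2" and blA1: "bounded_linear A1"
    and blA2: "bounded_linear A2" using d1.bD d2.bD d1.bA d2.bA by (simp_all add: bop_def)
  have bR: "bounded_linear R" unfolding R_def[abs_def]
    by (intro bounded_linear_Pair bounded_linear_compose[OF blD1 blA2] blD2)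
  have bS: "bounded_linear S" unfolding S_def[abs_def]
    by (intro bounded_linear_Pair bounded_linear_compose[OF blD2 blA1] blD1)
  have iR: "R (iunit x) = iunit (R x)" for x
    by (simp add: R_def bop_iunit[OF d1.bD] bop_iunit[OF d2.bD] bop_iunit[OF d2.bA])
  have iS: "S (iunit x) = iunit (S x)" for x
    by (simp add: S_def bop_iunit[OF d1.bD] bop_iunit[OF d2.bD] bop_iunit[OF d1.bA])
  have nRS: "norm (R h) = norm (S h)" for h
  proof -
    have "(norm (D1 (A2 h)))\<^sup>2 + (norm (D2 h))\<^sup>2 = (norm h)\<^sup>2 - (norm (A1 (A2 h)))\<^sup>2"
      using d1.normA_D[of "A2 h"] d2.normA_D[of h] by simp
    also have "\<dots> = (norm h)\<^sup>2 - (norm (A2 (A1 h)))\<^sup>2" by (simp add: AA normQa)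
    also have "\<dots> = (norm (D2 (A1 h)))\<^sup>2 + (norm (D1 h))\<^sup>2"
      using d2.normA_D[of "A1 h"] d1.normA_D[of h] by simp
    finally show ?thesis by (simp add: R_def S_def norm_Pair)
  qed
  obtain G Ga where G: "bounded_linear G" "bounded_linear Ga" "\<forall>x. G (iunit x) = iunit (G x)"
    "\<forall>x. Ga (iunit x) = iunit (Ga x)" "\<forall>x y. inner (G x) y = inner x (Ga y)"
    "\<forall>x. G (Ga x) = x" "\<forall>x. Ga (G x) = x" "\<forall>h. G (R h, 0::'h\<times>'h) = (S h, 0::'h\<times>'h)"
    using unitary_G[OF bR bS iR iS nRS] by blast
  interpret dil T1 T2 A1 A2 D1 D2 Q Qa G Ga q
  proof unfold_locales
    show "bop G" using G by (simp add: bop_def)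
    show "bop Ga" using G by (simp add: bop_def)
  qed (use d1 d2 bQ bQa Qadj QQa QaQ comm q1 G in \<open>auto simp: R_def S_def\<close>)
  show "\<exists>K W1 W2 Qb.
       closed_csubspace K \<and> range emb \<subseteq> K
     \<and> coisometry_on K W1 \<and> coisometry_on K W2 \<and> unitary_on K Qb
     \<and> reduces_on K (range emb) Qb
     \<and> (\<forall>h. Qb (emb h) = emb (Q h))
     \<and> (\<forall>x\<in>K. Qb x = (\<lambda>n. if n = 0 then Q (x 0) else cscale q (x n)))
     \<and> (\<forall>x\<in>K. W2 (W1 x) = W1 (W2 (Qb x)))
     \<and> (\<forall>h. W1 (emb h) = emb (T1 h)) \<and> (\<forall>h. W2 (emb h) = emb (T2 h))
     \<and> (\<forall>n m h. emb ((T1 ^^ n) ((T2 ^^ m) h)) = PH ((W1 ^^ n) ((W2 ^^ m) (emb h))))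
     \<and> (\<forall>n m h. emb ((T2 ^^ n) ((T1 ^^ m) h)) = PH ((W2 ^^ n) ((W1 ^^ m) (emb h))))"
    by (rule conclusion)
qed


end
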